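(* Let $x_0,y_0$ be positive integers and let $\{(X_t,Y_t)\}_{t\ge 0}$ be the CA competition process with fitness ratio $r=1$ started at $(X_0,Y_0)=(x_0,y_0)$. Let $T=\sup\{t\ge 0: X_t=Y_t\}$ (with $\sup\emptyset=-\infty$). Then, as $t\to\infty$ through the integers, \[ \mathbb{P}[T\ge t]\sim \frac{1}{2^{x_0+y_0-5/2}\sqrt{\pi}\,B(x_0,y_0)}\, t^{-1/2}, \] where $B(x,y)=\int_0^1 s^{x-1}(1-s)^{y-1}\,ds$ is the beta function.
   Context: The CA competition process with fitness ratio $r\ge 1$ started at $(x_0,y_0)$ is the discrete-time Markov chain $\{(X_t,Y_t)\}_{t\ge0}$ on $\{(x,y)\in\mathbb{Z}^2: x\ge1,y\ge1\}$ with $(X_0,Y_0)=(x_0,y_0)$ and transition probabilities: from $(x,y)$ it moves to $(x+1,y)$ with probability $\frac{rx}{rx+y}$ and to $(x,y+1)$ with probability $\frac{y}{rx+y}$. The notation $f(t)\sim g(t)$ means $\lim_{t\to\infty} f(t)/g(t)=1$. *)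

theory Defs
  imports "HOL-Probability.Probability" "HOL-Library.Landau_Symbols"
begin

definition ca_step :: "real \<Rightarrow> nat \<times> nat \<Rightarrow> real \<Rightarrow> nat \<times> nat" where
  "ca_step r s u =
     (let x = fst s; y = snd s in
      if u < r * real x / (r * real x + real y) then (x + 1, y) else (x, y + 1))"

primrec ca_path :: "real \<Rightarrow> nat \<Rightarrow> nat \<Rightarrow> (nat \<Rightarrow> real) \<Rightarrow> nat \<Rightarrow> nat \<times> nat" where
  "ca_path r x0 y0 \<omega> 0 = (x0, y0)"
| "ca_path r x0 y0 \<omega> (Suc t) = ca_step r (ca_path r x0 y0 \<omega> t) (\<omega> t)"

definition ca_space :: "(nat \<Rightarrow> real) measure" where
  "ca_space = PiM UNIV (\<lambda>_. uniform_measure lborel {0..1::real})"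

definition last_tie :: "real \<Rightarrow> nat \<Rightarrow> nat \<Rightarrow> (nat \<Rightarrow> real) \<Rightarrow> ereal" where
  "last_tie r x0 y0 \<omega> =
     Sup {ereal (real t) | t. fst (ca_path r x0 y0 \<omega> t) = snd (ca_path r x0 y0 \<omega> t)}"

end

theory Submission
  imports Defs "HOL-Real_Asymp.Real_Asymp"
begin

abbreviation UU :: "real measure" where "UU \<equiv> uniform_measure lborel {0..1::real}"

lemma prob_UU: "prob_space UU"
  by (intro prob_space_uniform_measure) auto

interpretation SQ: sequence_space UU
  by (simp add: sequence_space_def product_prob_space_def product_sigma_finite_def
      prob_UU prob_space_imp_sigma_finite product_prob_space_axioms_def)

lemma ca_space_eq: "ca_space = SQ.S" by (simp add: ca_space_def)

lemma prob_ca: "prob_space ca_space"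
  unfolding ca_space_eq by (rule SQ.prob_space_axioms)

definition pth :: "nat \<times> nat \<Rightarrow> (nat \<Rightarrow> real) \<Rightarrow> nat \<Rightarrow> nat \<times> nat" where
  "pth z \<omega> t = ca_path 1 (fst z) (snd z) \<omega> t"

lemma pth_0[simp]: "pth z \<omega> 0 = z" by (simp add: pth_def)

lemma pth_Suc_shift: "pth z \<omega> (Suc t) = pth (ca_step 1 z (\<omega> 0)) (\<lambda>i. \<omega> (Suc i)) t"
  unfolding pth_def by (induction t) auto

lemma meas_step: "(\<lambda>\<omega>. ca_step 1 z (\<omega> i)) \<in> ca_space \<rightarrow>\<^sub>M count_space UNIV"
  unfolding ca_step_def Let_def ca_space_def by measurable

lemma meas_pth: "(\<lambda>\<omega>. pth z \<omega> t) \<in> ca_space \<rightarrow>\<^sub>M count_space UNIV"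
proof (induction t)
  case 0 then show ?case by (simp add: pth_def)
next
  case (Suc t)
  have "(\<lambda>\<omega>. (\<lambda>z'. \<lambda>\<omega>. ca_step 1 z' (\<omega> t)) (pth z \<omega> t) \<omega>) \<in> ca_space \<rightarrow>\<^sub>M count_space UNIV"
    by (rule measurable_compose_countable'[OF meas_step Suc]) auto
  then show ?case by (simp add: pth_def)
qed

lemma meas_shift: "(\<lambda>\<omega> i. \<omega> (Suc i)) \<in> ca_space \<rightarrow>\<^sub>M ca_space"
  unfolding ca_space_def
  by (rule measurable_PiM_single') (auto simp: space_PiM)

lemma emeasure_UU_less: "0 \<le> p \<Longrightarrow> p \<le> 1 \<Longrightarrow> emeasure UU {..<p} = ennreal p"
proof -
  assume p: "0 \<le> p" "p \<le> 1"
  have "{0..1::real} \<inter> {..<p} = {0..<p}" using p by auto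
  then show ?thesis using p by (simp add: emeasure_uniform_measure divide_ennreal_def)
qed

lemma emeasure_UU_ge: "0 \<le> p \<Longrightarrow> p \<le> 1 \<Longrightarrow> emeasure UU {p..} = ennreal (1 - p)"
proof -
  assume p: "0 \<le> p" "p \<le> 1"
  have "{0..1::real} \<inter> {p..} = {p..1}" using p by auto
  then show ?thesis using p by (simp add: emeasure_uniform_measure divide_ennreal_def)
qed

lemma step_integral:
  fixes K :: "nat \<times> nat \<Rightarrow> (nat \<Rightarrow> real) \<Rightarrow> ennreal"
  assumes K: "\<And>z'. K z' \<in> borel_measurable ca_space" and pos: "fst z + snd z > 0"
  shows "(\<integral>\<^sup>+\<omega>. K (ca_step 1 z (\<omega> 0)) (\<lambda>i. \<omega> (Suc i)) \<partial>ca_space)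
     = ennreal (real (fst z) / (real (fst z) + real (snd z))) * (\<integral>\<^sup>+\<omega>. K (fst z + 1, snd z) \<omega> \<partial>ca_space)
     + ennreal (real (snd z) / (real (fst z) + real (snd z))) * (\<integral>\<^sup>+\<omega>. K (fst z, snd z + 1) \<omega> \<partial>ca_space)"
proof -
  define x where "x = fst z"
  define y where "y = snd z"
  define p :: real where "p = x / (x + y)"
  have p01: "0 \<le> p" "p \<le> 1" using pos by (auto simp: p_def x_def y_def)
  have xy: "real x + real y > 0" using pos unfolding x_def y_def by linarith
  have yp: "real y / (x + y) = 1 - p" using xy by (simp add: p_def field_simps)
  let ?G = "\<lambda>\<omega>. K (ca_step 1 z (\<omega> 0)) (\<lambda>i. \<omega> (Suc i))"
  have Gm: "?G \<in> borel_measurable ca_space"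
  proof -
    have "(\<lambda>\<omega>. (\<lambda>z'. \<lambda>\<omega>. K z' (\<lambda>i. \<omega> (Suc i))) (ca_step 1 z (\<omega> 0)) \<omega>) \<in> borel_measurable ca_space"
      by (rule measurable_compose_countable'[OF _ meas_step])
         (use measurable_comp[OF meas_shift K] in \<open>auto simp: comp_def\<close>)
    then show ?thesis by simp
  qed
  have Gm': "?G \<in> borel_measurable SQ.S" using Gm by (simp add: ca_space_eq)
  define \<Phi> where "\<Phi> z' = (\<integral>\<^sup>+\<omega>. K z' \<omega> \<partial>ca_space)" for z'
  have "(\<integral>\<^sup>+\<omega>. ?G \<omega> \<partial>ca_space) = (\<integral>\<^sup>+\<omega>. ?G \<omega> \<partial>distr (UU \<Otimes>\<^sub>M SQ.S) SQ.S (\<lambda>(s, \<omega>). case_nat s \<omega>))"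
    by (simp add: SQ.PiM_iter ca_space_eq)
  also have "\<dots> = (\<integral>\<^sup>+q. ?G (case_nat (fst q) (snd q)) \<partial>(UU \<Otimes>\<^sub>M SQ.S))"
    by (subst nn_integral_distr) (auto simp: Gm' split_beta')
  also have "\<dots> = (\<integral>\<^sup>+s. \<integral>\<^sup>+\<omega>. ?G (case_nat s \<omega>) \<partial>SQ.S \<partial>UU)"
  proof -
    have cm: "(\<lambda>q. case_nat (fst q) (snd q)) \<in> (UU \<Otimes>\<^sub>M SQ.S) \<rightarrow>\<^sub>M SQ.S"
      by measurable
    have "(\<lambda>q. ?G (case_nat (fst q) (snd q))) \<in> borel_measurable (UU \<Otimes>\<^sub>M SQ.S)"
      using measurable_comp[OF cm Gm'] by (simp add: comp_def)
    then show ?thesis by (subst SQ.nn_integral_fst[symmetric]) (auto simp: split_beta')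
  qed
  also have "\<dots> = (\<integral>\<^sup>+s. \<Phi> (ca_step 1 z s) \<partial>UU)"
    by (simp add: \<Phi>_def ca_space_eq)
  also have "\<dots> = (\<integral>\<^sup>+s. \<Phi> (x+1, y) * indicator {..<p} s + \<Phi> (x, y+1) * indicator {p..} s \<partial>UU)"
    by (intro nn_integral_cong) (auto simp: ca_step_def x_def y_def p_def indicator_def)
  also have "\<dots> = \<Phi> (x+1, y) * emeasure UU {..<p} + \<Phi> (x, y+1) * emeasure UU {p..}"
    apply (subst nn_integral_add)
      apply (simp_all del: emeasure_uniform_measure)
    apply (subst (1 2) nn_integral_cmult_indicator)
      apply (simp_all del: emeasure_uniform_measure)
    done
  also have "\<dots> = ennreal p * \<Phi> (x+1, y) + ennreal (1 - p) * \<Phi> (x, y+1)"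
    using p01 by (simp del: emeasure_uniform_measure add: emeasure_UU_less emeasure_UU_ge mult.commute)
  finally show ?thesis unfolding \<Phi>_def x_def y_def p_def yp[unfolded x_def y_def p_def, symmetric] by simp
qed

declare meas_pth[measurable]

definition Pop :: "(nat \<times> nat \<Rightarrow> ennreal) \<Rightarrow> nat \<times> nat \<Rightarrow> ennreal" where
  "Pop \<phi> z = ennreal (real (fst z) / (real (fst z) + real (snd z))) * \<phi> (fst z + 1, snd z)
     + ennreal (real (snd z) / (real (fst z) + real (snd z))) * \<phi> (fst z, snd z + 1)"

definition Ef :: "(nat \<times> nat \<Rightarrow> ennreal) \<Rightarrow> nat \<times> nat \<Rightarrow> nat \<Rightarrow> ennreal" where
  "Ef \<phi> z t = (\<integral>\<^sup>+\<omega>. \<phi> (pth z \<omega> t) \<partial>ca_space)"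

abbreviation tie :: "nat \<times> nat \<Rightarrow> bool" where "tie z \<equiv> fst z = snd z"

lemma space_ca_nonempty: "emeasure ca_space (space ca_space) = 1"
  using prob_space.emeasure_space_1[OF prob_ca] .

lemma Ef_0: "Ef \<phi> z 0 = \<phi> z"
  by (simp add: Ef_def space_ca_nonempty)

lemma Ef_Suc: assumes "fst z + snd z > 0" shows "Ef \<phi> z (Suc t) = Pop (\<lambda>z'. Ef \<phi> z' t) z"
proof -
  have "Ef \<phi> z (Suc t) = (\<integral>\<^sup>+\<omega>. (\<lambda>z' \<omega>. \<phi> (pth z' \<omega> t)) (ca_step 1 z (\<omega> 0)) (\<lambda>i. \<omega> (Suc i)) \<partial>ca_space)"
    by (simp add: Ef_def pth_Suc_shift)
  also have "\<dots> = Pop (\<lambda>z'. Ef \<phi> z' t) z"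
    using assms by (subst step_integral) (auto simp: Pop_def Ef_def)
  finally show ?thesis .
qed

lemma Pop_cong: "a (fst z + 1, snd z) = b (fst z + 1, snd z) \<Longrightarrow> a (fst z, snd z + 1) = b (fst z, snd z + 1)
   \<Longrightarrow> Pop a z = Pop b z"
  by (simp add: Pop_def)

lemma Ef_Suc': "fst z + snd z > 0 \<Longrightarrow> Ef \<phi> z (Suc t) = Ef (Pop \<phi>) z t"
proof (induction t arbitrary: z)
  case 0 then show ?case by (simp add: Ef_Suc Ef_0)
next
  case (Suc t)
  have "Ef \<phi> z (Suc (Suc t)) = Pop (\<lambda>z'. Ef \<phi> z' (Suc t)) z" using Suc.prems by (rule Ef_Suc)
  also have "\<dots> = Pop (\<lambda>z'. Ef (Pop \<phi>) z' t) z"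
  proof -
    have 1: "Ef \<phi> (fst z+1, snd z) (Suc t) = Ef (Pop \<phi>) (fst z+1, snd z) t" by (rule Suc.IH) simp
    have 2: "Ef \<phi> (fst z, snd z+1) (Suc t) = Ef (Pop \<phi>) (fst z, snd z+1) t" by (rule Suc.IH) simp
    show ?thesis by (rule Pop_cong) (simp_all only: 1 2)
  qed
  also have "\<dots> = Ef (Pop \<phi>) z (Suc t)" using Suc.prems by (rule Ef_Suc[symmetric])
  finally show ?case .
qed

lemma Ef_add: "Ef (\<lambda>z. \<phi> z + \<psi> z) z t = Ef \<phi> z t + Ef \<psi> z t"
  unfolding Ef_def by (rule nn_integral_add) auto

definition hitA :: "nat \<times> nat \<Rightarrow> nat \<Rightarrow> ennreal" where
  "hitA z t = emeasure ca_space {\<omega> \<in> space ca_space. \<exists>s\<ge>t. tie (pth z \<omega> s)}"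

lemma hitA_sets[measurable]: "{\<omega> \<in> space ca_space. \<exists>s\<ge>t. tie (pth z \<omega> s)} \<in> sets ca_space"
  by measurable

lemma hitA_int: "hitA z t = (\<integral>\<^sup>+\<omega>. indicator {\<omega> \<in> space ca_space. \<exists>s\<ge>t. tie (pth z \<omega> s)} \<omega> \<partial>ca_space)"
  by (simp add: hitA_def)

lemma hitA_Suc: assumes "fst z + snd z > 0" shows "hitA z (Suc t) = Pop (\<lambda>z'. hitA z' t) z"
proof -
  let ?K = "\<lambda>z' \<omega>. indicator {\<omega> \<in> space ca_space. \<exists>s\<ge>t. tie (pth z' \<omega> s)} \<omega> :: ennreal"
  have "hitA z (Suc t) = (\<integral>\<^sup>+\<omega>. ?K (ca_step 1 z (\<omega> 0)) (\<lambda>i. \<omega> (Suc i)) \<partial>ca_space)"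
  proof -
    have "\<And>\<omega>. \<omega> \<in> space ca_space \<Longrightarrow> indicator {\<omega> \<in> space ca_space. \<exists>s\<ge>Suc t. tie (pth z \<omega> s)} \<omega>
        = (?K (ca_step 1 z (\<omega> 0)) (\<lambda>i. \<omega> (Suc i)) :: ennreal)"
    proof -
      fix \<omega> assume w: "\<omega> \<in> space ca_space"
      have sh: "(\<lambda>i. \<omega> (Suc i)) \<in> space ca_space" using measurable_space[OF meas_shift w] .
      have "(\<exists>s\<ge>Suc t. tie (pth z \<omega> s)) = (\<exists>s\<ge>t. tie (pth (ca_step 1 z (\<omega> 0)) (\<lambda>i. \<omega> (Suc i)) s))"
        by (metis Suc_le_D Suc_le_mono pth_Suc_shift)
      then show "?thesis \<omega>" using w sh by (simp add: indicator_def)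
    qed
    then show ?thesis unfolding hitA_int by (intro nn_integral_cong) auto
  qed
  also have "\<dots> = Pop (\<lambda>z'. hitA z' t) z"
    using assms by (subst step_integral) (auto simp: Pop_def hitA_int)
  finally show ?thesis .
qed

lemma hitA_0: assumes "fst z + snd z > 0"
  shows "hitA z 0 = (if tie z then 1 else Pop (\<lambda>z'. hitA z' 0) z)"
proof (cases "tie z")
  case True
  then have "{\<omega> \<in> space ca_space. \<exists>s\<ge>0. tie (pth z \<omega> s)} = space ca_space"
    by (auto intro: exI[of _ 0])
  then show ?thesis using True by (simp add: hitA_def space_ca_nonempty)
next
  case False
  have "{\<omega> \<in> space ca_space. \<exists>s\<ge>0. tie (pth z \<omega> s)} = {\<omega> \<in> space ca_space. \<exists>s\<ge>Suc 0. tie (pth z \<omega> s)}"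
    using False by (auto, metis Suc_leI neq0_conv pth_0)
  then have "hitA z 0 = hitA z (Suc 0)" by (simp add: hitA_def)
  then show ?thesis using False hitA_Suc[OF assms] by simp
qed

definition um :: "nat \<times> nat \<Rightarrow> nat \<Rightarrow> ennreal" where
  "um z m = emeasure ca_space {\<omega> \<in> space ca_space. \<exists>s\<le>m. tie (pth z \<omega> s)}"

definition vm :: "(nat \<times> nat \<Rightarrow> ennreal) \<Rightarrow> nat \<times> nat \<Rightarrow> nat \<Rightarrow> ennreal" where
  "vm \<phi> z m = (\<integral>\<^sup>+\<omega>. indicator {\<omega> \<in> space ca_space. \<forall>s\<le>m. \<not> tie (pth z \<omega> s)} \<omega> * \<phi> (pth z \<omega> m) \<partial>ca_space)"

lemma um_sets[measurable]: "{\<omega> \<in> space ca_space. \<exists>s\<le>m. tie (pth z \<omega> s)} \<in> sets ca_space"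
  by measurable

lemma vm_sets[measurable]: "{\<omega> \<in> space ca_space. \<forall>s\<le>m. \<not> tie (pth z \<omega> s)} \<in> sets ca_space"
  by measurable

lemma um_int: "um z m = (\<integral>\<^sup>+\<omega>. indicator {\<omega> \<in> space ca_space. \<exists>s\<le>m. tie (pth z \<omega> s)} \<omega> \<partial>ca_space)"
  by (simp add: um_def)

lemma exists_le_Suc_shift:
  "(\<exists>s\<le>Suc m. tie (pth z \<omega> s)) = (tie z \<or> (\<exists>s\<le>m. tie (pth (ca_step 1 z (\<omega> 0)) (\<lambda>i. \<omega> (Suc i)) s)))"
  apply (auto simp: pth_Suc_shift)
   apply (metis Suc_le_mono not0_implies_Suc pth_0 pth_Suc_shift)
  done

lemma um_0: "um z 0 = (if tie z then 1 else 0)"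
proof -
  have "{\<omega> \<in> space ca_space. \<exists>s\<le>0. tie (pth z \<omega> s)} = (if tie z then space ca_space else {})" by auto
  then show ?thesis by (simp add: um_def space_ca_nonempty)
qed

lemma um_Suc: assumes "fst z + snd z > 0"
  shows "um z (Suc m) = (if tie z then 1 else Pop (\<lambda>z'. um z' m) z)"
proof (cases "tie z")
  case True
  then have "{\<omega> \<in> space ca_space. \<exists>s\<le>Suc m. tie (pth z \<omega> s)} = space ca_space"
    by (auto intro: exI[of _ 0])
  then show ?thesis using True by (simp add: um_def space_ca_nonempty)
next
  case False
  let ?K = "\<lambda>z' \<omega>. indicator {\<omega> \<in> space ca_space. \<exists>s\<le>m. tie (pth z' \<omega> s)} \<omega> :: ennreal"
  have "um z (Suc m) = (\<integral>\<^sup>+\<omega>. ?K (ca_step 1 z (\<omega> 0)) (\<lambda>i. \<omega> (Suc i)) \<partial>ca_space)"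
    unfolding um_int
  proof (intro nn_integral_cong)
    fix \<omega> assume w: "\<omega> \<in> space ca_space"
    have sh: "(\<lambda>i. \<omega> (Suc i)) \<in> space ca_space" using measurable_space[OF meas_shift w] .
    show "indicator {\<omega> \<in> space ca_space. \<exists>s\<le>Suc m. tie (pth z \<omega> s)} \<omega> = ?K (ca_step 1 z (\<omega> 0)) (\<lambda>i. \<omega> (Suc i))"
      using w sh False by (simp add: indicator_def exists_le_Suc_shift)
  qed
  also have "\<dots> = Pop (\<lambda>z'. um z' m) z"
    using assms by (subst step_integral) (auto simp: Pop_def um_int)
  finally show ?thesis using False by simp
qed

lemma vm_0: "vm \<phi> z 0 = (if tie z then 0 else \<phi> z)"
proof -
  have "{\<omega> \<in> space ca_space. \<forall>s\<le>0. \<not> tie (pth z \<omega> s)} = (if tie z then {} else space ca_space)" by auto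
  moreover have "(\<integral>\<^sup>+\<omega>. indicator (space ca_space) \<omega> * \<phi> z \<partial>ca_space) = \<phi> z"
    by (subst nn_integral_cong[where v="\<lambda>_. \<phi> z"]) (auto simp: space_ca_nonempty)
  ultimately show ?thesis by (simp add: vm_def)
qed

lemma vm_Suc: assumes "fst z + snd z > 0"
  shows "vm \<phi> z (Suc m) = (if tie z then 0 else Pop (\<lambda>z'. vm \<phi> z' m) z)"
proof (cases "tie z")
  case True
  then have "{\<omega> \<in> space ca_space. \<forall>s\<le>Suc m. \<not> tie (pth z \<omega> s)} = {}"
    by auto
  then show ?thesis using True by (simp add: vm_def)
next
  case False
  let ?K = "\<lambda>z' \<omega>. indicator {\<omega> \<in> space ca_space. \<forall>s\<le>m. \<not> tie (pth z' \<omega> s)} \<omega> * \<phi> (pth z' \<omega> m)"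
  have "vm \<phi> z (Suc m) = (\<integral>\<^sup>+\<omega>. ?K (ca_step 1 z (\<omega> 0)) (\<lambda>i. \<omega> (Suc i)) \<partial>ca_space)"
    unfolding vm_def
  proof (intro nn_integral_cong)
    fix \<omega> assume w: "\<omega> \<in> space ca_space"
    have sh: "(\<lambda>i. \<omega> (Suc i)) \<in> space ca_space" using measurable_space[OF meas_shift w] .
    have e: "(\<forall>s\<le>Suc m. \<not> tie (pth z \<omega> s)) = (\<forall>s\<le>m. \<not> tie (pth (ca_step 1 z (\<omega> 0)) (\<lambda>i. \<omega> (Suc i)) s))"
      using exists_le_Suc_shift[of m z \<omega>] False by blast
    show "indicator {\<omega> \<in> space ca_space. \<forall>s\<le>Suc m. \<not> tie (pth z \<omega> s)} \<omega> * \<phi> (pth z \<omega> (Suc m)) = ?K (ca_step 1 z (\<omega> 0)) (\<lambda>i. \<omega> (Suc i))"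
      using w sh e by (simp add: indicator_def pth_Suc_shift)
  qed
  also have "\<dots> = Pop (\<lambda>z'. vm \<phi> z' m) z"
    using assms by (subst step_integral) (auto simp: Pop_def vm_def)
  finally show ?thesis using False by simp
qed

lemma Pop_add: "Pop (\<lambda>z. a z + b z) z = Pop a z + Pop b z"
  by (simp add: Pop_def distrib_left)


lemma F_decomp:
  assumes harm: "\<And>z. fst z \<ge> 1 \<and> snd z \<ge> 1 \<Longrightarrow> \<not> tie z \<Longrightarrow> Pop F z = F z"
    and one: "\<And>z. fst z \<ge> 1 \<Longrightarrow> tie z \<Longrightarrow> F z = 1"
  shows "fst z \<ge> 1 \<and> snd z \<ge> 1 \<Longrightarrow> F z = um z m + vm F z m"
proof (induction m arbitrary: z)
  case 0 then show ?case by (cases "tie z") (simp_all add: um_0 vm_0 one)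
next
  case (Suc m)
  show ?case
  proof (cases "tie z")
    case True then show ?thesis using Suc.prems by (simp add: um_Suc vm_Suc one add_pos_pos)
  next
    case False
    have "um z (Suc m) + vm F z (Suc m) = Pop (\<lambda>z'. um z' m + vm F z' m) z"
      using Suc.prems False by (simp add: um_Suc vm_Suc Pop_add add_pos_pos)
    also have "\<dots> = Pop F z"
      using Suc.prems by (intro Pop_cong) (simp_all add: Suc.IH[symmetric])
    also have "\<dots> = F z" using harm Suc.prems False by simp
    finally show ?thesis by simp
  qed
qed

lemma um_SUP: "(SUP m. um z m) = hitA z 0"
proof -
  have "(SUP m. um z m) = emeasure ca_space (\<Union>m. {\<omega> \<in> space ca_space. \<exists>s\<le>m. tie (pth z \<omega> s)})"
    unfolding um_def
    by (rule SUP_emeasure_incseq) (auto simp: incseq_def intro: order_trans)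
  also have "(\<Union>m. {\<omega> \<in> space ca_space. \<exists>s\<le>m. tie (pth z \<omega> s)}) = {\<omega> \<in> space ca_space. \<exists>s\<ge>0. tie (pth z \<omega> s)}"
    by auto
  finally show ?thesis by (simp add: hitA_def)
qed

lemma vm_le_Ef: "vm \<phi> z m \<le> Ef \<phi> z m"
  unfolding vm_def Ef_def
  by (intro nn_integral_mono) (auto simp: indicator_def)

lemma hitA_eq_F:
  assumes harm: "\<And>z. fst z \<ge> 1 \<and> snd z \<ge> 1 \<Longrightarrow> \<not> tie z \<Longrightarrow> Pop F z = F z"
    and one: "\<And>z. fst z \<ge> 1 \<Longrightarrow> tie z \<Longrightarrow> F z = 1"
    and van: "\<And>z e. fst z \<ge> 1 \<and> snd z \<ge> 1 \<Longrightarrow> e > 0 \<Longrightarrow> \<exists>m. Ef F z m \<le> ennreal e"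
  shows "fst z \<ge> 1 \<and> snd z \<ge> 1 \<Longrightarrow> hitA z t = Ef F z t"
proof (induction t arbitrary: z)
  case 0
  have le1: "hitA z 0 \<le> F z"
    unfolding um_SUP[symmetric]
    by (rule SUP_least) (metis F_decomp[OF harm one 0] le_iff_add)
  have "F z \<le> hitA z 0"
  proof (rule ennreal_le_epsilon)
    fix e :: real assume "0 < e"
    then obtain m where m: "Ef F z m \<le> ennreal e" using van[OF 0 \<open>0 < e\<close>] by blast
    have "F z = um z m + vm F z m" using F_decomp[OF harm one 0] .
    also have "\<dots> \<le> hitA z 0 + ennreal e"
      by (intro add_mono) (auto simp: um_SUP[symmetric] intro: SUP_upper order_trans[OF vm_le_Ef m])
    finally show "F z \<le> hitA z 0 + ennreal e" .
  qed
  with le1 show ?case by (simp add: Ef_0)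
next
  case (Suc t)
  have pz: "fst z + snd z > 0" using Suc.prems by simp
  have "hitA z (Suc t) = Pop (\<lambda>z'. hitA z' t) z" using pz by (rule hitA_Suc)
  also have "\<dots> = Pop (\<lambda>z'. Ef F z' t) z" using Suc.prems by (intro Pop_cong) (simp_all add: Suc.IH)
  also have "\<dots> = Ef F z (Suc t)" using pz by (rule Ef_Suc[symmetric])
  finally show ?case .
qed

definition w :: "nat \<Rightarrow> nat \<Rightarrow> nat \<Rightarrow> nat \<Rightarrow> real" where
  "w x y t a = real (t choose a) * pochhammer (real x) a * pochhammer (real y) (t - a)
               / pochhammer (real x + real y) t"

lemma w_nonneg: "w x y t a \<ge> 0"
  unfolding w_def pochhammer_prod
  by (intro divide_nonneg_nonneg mult_nonneg_nonneg prod_nonneg) auto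

lemma w_0: "w x y 0 a = (if a = 0 then 1 else 0)"
  by (simp add: w_def)

lemma w_Suc:
  assumes "x + y > 0"
  shows "w x y (Suc t) a =
    (if a = 0 then 0 else real x / (real x + real y) * w (x+1) y t (a-1))
  + (if a \<le> t then real y / (real x + real y) * w x (y+1) t a else 0)"
proof -
  have XY: "real x + real y > 0" by (metis assms of_nat_0_less_iff of_nat_add)
  have pXY: "pochhammer (real x + real y) (Suc t) = (real x + real y) * pochhammer (real x + real y + 1) t"
    by (simp add: pochhammer_rec)
  have ppos: "pochhammer (real x + real y + 1) t > 0"
    using XY by (intro pochhammer_pos) simp
  show ?thesis
  proof (cases a)
    case 0
    have "pochhammer (real y) (Suc t) = real y * pochhammer (real y + 1) t" by (simp add: pochhammer_rec)
    then show ?thesis using 0 XY ppos by (simp add: w_def pXY field_simps add_ac)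
  next
    case (Suc k)
    show ?thesis
    proof (cases "k \<le> t")
      case False
      then show ?thesis using Suc by (simp add: w_def binomial_eq_0)
    next
      case True
      have px: "pochhammer (real x) (Suc k) = real x * pochhammer (real x + 1) k" by (simp add: pochhammer_rec)
      have c: "real (Suc t choose Suc k) = real (t choose k) + real (t choose Suc k)" by simp
      show ?thesis
      proof (cases "k = t")
        case True
        have "pochhammer (real x) (Suc t) = real x * pochhammer (1 + real x) t"
          by (simp add: pochhammer_rec add.commute)
        then show ?thesis using Suc XY ppos True by (simp add: w_def pXY field_simps add_ac)
      next
        case False
        with \<open>k \<le> t\<close> have kt: "Suc k \<le> t" by simp
        have py: "pochhammer (real y) (t - k) = real y * pochhammer (real y + 1) (t - Suc k)"
        proof -
          have "t - k = Suc (t - Suc k)" using kt by simp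
          then show ?thesis by (simp add: pochhammer_rec)
        qed
        show ?thesis using Suc kt XY ppos
          by (simp add: w_def pXY px py c field_simps add_ac) (simp add: add_divide_distrib)
      qed
    qed
  qed
qed

lemma Ef_sum:
  "x + y > 0 \<Longrightarrow> Ef \<phi> (x, y) t = (\<Sum>a\<le>t. ennreal (w x y t a) * \<phi> (x + a, y + (t - a)))"
proof (induction t arbitrary: x y)
  case 0 then show ?case by (simp add: Ef_0 w_0)
next
  case (Suc t)
  define p where "p = real x / (real x + real y)"
  define q where "q = real y / (real x + real y)"
  have p0: "p \<ge> 0" "q \<ge> 0" by (auto simp: p_def q_def)
  have "Ef \<phi> (x, y) (Suc t) = ennreal p * Ef \<phi> (x+1, y) t + ennreal q * Ef \<phi> (x, y+1) t"
    using Suc.prems by (simp add: Ef_Suc Pop_def p_def q_def)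
  also have "\<dots> = ennreal p * (\<Sum>a\<le>t. ennreal (w (x+1) y t a) * \<phi> (x + 1 + a, y + (t - a)))
                 + ennreal q * (\<Sum>a\<le>t. ennreal (w x (y+1) t a) * \<phi> (x + a, y + 1 + (t - a)))"
    using Suc.IH[of "x+1" y] Suc.IH[of x "y+1"] by simp
  also have "\<dots> = (\<Sum>a\<le>Suc t. ennreal (if a = 0 then 0 else p * w (x+1) y t (a-1)) * \<phi> (x + a, y + (Suc t - a)))
                 + (\<Sum>a\<le>Suc t. ennreal (if a \<le> t then q * w x (y+1) t a else 0) * \<phi> (x + a, y + (Suc t - a)))"
  proof -
    have 1: "(\<Sum>a\<le>Suc t. ennreal (if a = 0 then 0 else p * w (x+1) y t (a-1)) * \<phi> (x + a, y + (Suc t - a)))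
       = ennreal p * (\<Sum>a\<le>t. ennreal (w (x+1) y t a) * \<phi> (x + 1 + a, y + (t - a)))"
      by (subst sum.atMost_Suc_shift) (simp add: sum_distrib_left ennreal_mult p0 mult.assoc w_nonneg)
    have 2: "(\<Sum>a\<le>Suc t. ennreal (if a \<le> t then q * w x (y+1) t a else 0) * \<phi> (x + a, y + (Suc t - a)))
       = ennreal q * (\<Sum>a\<le>t. ennreal (w x (y+1) t a) * \<phi> (x + a, y + 1 + (t - a)))"
      by (simp add: sum_distrib_left ennreal_mult p0 mult.assoc Suc_diff_le w_nonneg)
    show ?thesis by (simp only: 1 2)
  qed
  also have "\<dots> = (\<Sum>a\<le>Suc t. ennreal (w x y (Suc t) a) * \<phi> (x + a, y + (Suc t - a)))"
    unfolding sum.distrib[symmetric]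
  proof (intro sum.cong refl)
    fix a
    have A0: "0 \<le> (if a = 0 then 0 else p * w (x+1) y t (a-1))" using p0 w_nonneg by simp
    have B0: "0 \<le> (if a \<le> t then q * w x (y+1) t a else 0)" using p0 w_nonneg by simp
    have "w x y (Suc t) a = (if a = 0 then 0 else p * w (x+1) y t (a-1)) + (if a \<le> t then q * w x (y+1) t a else 0)"
      unfolding p_def q_def by (rule w_Suc[OF Suc.prems])
    then show "ennreal (if a = 0 then 0 else p * w (x + 1) y t (a - 1)) * \<phi> (x + a, y + (Suc t - a)) +
         ennreal (if a \<le> t then q * w x (y + 1) t a else 0) * \<phi> (x + a, y + (Suc t - a)) =
         ennreal (w x y (Suc t) a) * \<phi> (x + a, y + (Suc t - a))"
      by (simp only: ennreal_plus[OF A0 B0] distrib_right)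
  qed
  finally show ?case .
qed

definition Sb :: "nat \<Rightarrow> nat \<Rightarrow> nat" where "Sb N m = (\<Sum>k\<in>{m..N}. N choose k)"

lemma Sb_S1: "Sb n x = (n choose x) + Sb n (Suc x)"
proof (cases "x \<le> n")
  case True
  then have "{x..n} = insert x {Suc x..n}" by auto
  then show ?thesis by (simp add: Sb_def)
next
  case False then show ?thesis by (simp add: Sb_def binomial_eq_0)
qed

lemma Sb_S2: "Sb (Suc N) (Suc x) = Sb N (Suc x) + Sb N x"
proof -
  have "Sb (Suc N) (Suc x) = (\<Sum>j\<in>{x..N}. Suc N choose Suc j)"
    unfolding Sb_def by (rule sum.shift_bounds_cl_Suc_ivl)
  also have "\<dots> = (\<Sum>j\<in>{x..N}. N choose j) + (\<Sum>j\<in>{x..N}. N choose Suc j)"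
    by (simp add: sum.distrib)
  also have "(\<Sum>j\<in>{x..N}. N choose Suc j) = (\<Sum>k\<in>{Suc x..Suc N}. N choose k)"
    by (rule sum.shift_bounds_cl_Suc_ivl[symmetric])
  also have "\<dots> = Sb N (Suc x)"
    unfolding Sb_def by (simp add: sum.cl_ivl_Suc)
  finally show ?thesis by (simp add: Sb_def)
qed

lemma Sb_rev: "a \<le> Suc N \<Longrightarrow> (\<Sum>j<a. N choose j) = Sb N (Suc N - a)"
  unfolding Sb_def
  by (rule sum.reindex_bij_witness[where i="\<lambda>k. N - k" and j="\<lambda>j. N - j"])
     (auto simp: binomial_symmetric[symmetric])

lemma Sb_total: "m \<le> Suc N \<Longrightarrow> 2 ^ N = (\<Sum>j<m. N choose j) + Sb N m"
proof -
  assume m: "m \<le> Suc N"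
  have "{..N} = {..<m} \<union> {m..N}" using m by auto
  then have "(\<Sum>j\<le>N. N choose j) = (\<Sum>j<m. N choose j) + Sb N m"
    unfolding Sb_def by (simp add: sum.union_disjoint ivl_disj_int)
  then show ?thesis by (simp add: choose_row_sum)
qed

lemma Sb_le: "Sb N m \<le> 2 ^ N"
proof -
  have "Sb N m \<le> (\<Sum>j\<le>N. N choose j)"
    unfolding Sb_def by (rule sum_mono2) auto
  then show ?thesis by (simp add: choose_row_sum)
qed

lemma harm_nat:
  assumes "y < x"
  shows "x * Sb (x+y) (Suc x) + y * Sb (x+y) x = 2 * (x+y) * Sb (x+y-1) x"
proof -
  define n where "n = x + y"
  have "n > 0" using assms by (simp add: n_def)
  then obtain N where N: "n = Suc N" using gr0_implies_Suc by blast
  have 1: "Sb n x = (n choose x) + Sb n (Suc x)" by (rule Sb_S1)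
  have 2: "y * (n choose x) = n * (N choose x)"
    using binomial_absorb_comp[of n x] N by (simp add: n_def)
  have 3: "Sb n (Suc x) = Sb N (Suc x) + Sb N x" using N Sb_S2 by simp
  have 4: "Sb N x = (N choose x) + Sb N (Suc x)" by (rule Sb_S1)
  have "x * Sb n (Suc x) + y * Sb n x = n * Sb n (Suc x) + y * (n choose x)"
    unfolding 1 by (simp add: n_def algebra_simps)
  also have "\<dots> = n * (Sb N (Suc x) + Sb N x + (N choose x))" by (simp add: 2 3 algebra_simps)
  also have "\<dots> = 2 * n * Sb N x" using 4 by (simp add: algebra_simps)
  finally have "x * Sb n (Suc x) + y * Sb n x = 2 * n * Sb N x" .
  then show ?thesis using N unfolding n_def by (metis diff_Suc_1)
qed

definition fr :: "nat \<times> nat \<Rightarrow> real" where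
  "fr z = 2 * real (Sb (fst z + snd z - 1) (max (fst z) (snd z))) / 2 ^ (fst z + snd z - 1)"

definition Popr :: "(nat \<times> nat \<Rightarrow> real) \<Rightarrow> nat \<times> nat \<Rightarrow> real" where
  "Popr g z = real (fst z) / (real (fst z) + real (snd z)) * g (fst z + 1, snd z)
     + real (snd z) / (real (fst z) + real (snd z)) * g (fst z, snd z + 1)"

lemma Pop_real: "(\<And>z. g z \<ge> 0) \<Longrightarrow> Pop (\<lambda>z. ennreal (g z)) z = ennreal (Popr g z)"
  unfolding Pop_def Popr_def
  apply (subst ennreal_plus)
    apply (auto intro!: mult_nonneg_nonneg divide_nonneg_nonneg)[2]
  apply (subst (1 2) ennreal_mult)
      apply auto
  done

lemma fr_nonneg: "fr z \<ge> 0" by (simp add: fr_def)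

lemma fr_le2: "fr z \<le> 2"
proof -
  have "real (Sb (fst z + snd z - 1) (max (fst z) (snd z))) \<le> 2 ^ (fst z + snd z - 1)"
  proof -
    have "real (Sb (fst z + snd z - 1) (max (fst z) (snd z))) \<le> real (2 ^ (fst z + snd z - 1))"
      using Sb_le by (simp only: of_nat_le_iff)
    also have "\<dots> = 2 ^ (fst z + snd z - 1)" by simp
    finally show ?thesis .
  qed
  then show ?thesis by (simp add: fr_def divide_le_eq)
qed

lemma fr_sym: "fr (x, y) = fr (y, x)" by (simp add: fr_def add.commute max.commute)

lemma harm_gt: assumes "y < x" shows "Popr fr (x, y) = fr (x, y)"
proof -
  define n where "n = x + y"
  have n1: "n \<ge> 1" using assms n_def by simp
  have e: "real x * real (Sb n (Suc x)) + real y * real (Sb n x) = 2 * real n * real (Sb (n-1) x)"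
    using harm_nat[OF assms] unfolding n_def by (metis of_nat_add of_nat_mult of_nat_numeral)
  have p: "(2::real) ^ n = 2 * 2 ^ (n - 1)" using n1 by (metis Suc_diff_le diff_Suc_1 power_Suc)
  have f1: "fr (Suc x, y) = 2 * real (Sb n (Suc x)) / 2 ^ n" using assms by (simp add: fr_def n_def max_def)
  have mx: "max x (Suc y) = x" using assms by simp
  have f2: "fr (x, Suc y) = 2 * real (Sb n x) / 2 ^ n" by (simp add: fr_def n_def mx del: max_absorb1 max_absorb2)
  have f0: "fr (x, y) = 2 * real (Sb (n-1) x) / 2 ^ (n-1)" using assms by (simp add: fr_def n_def max_def)
  have nn: "real x + real y = real n" by (simp add: n_def)
  have "Popr fr (x, y) = (real x * (2 * real (Sb n (Suc x))) + real y * (2 * real (Sb n x))) / (real n * 2 ^ n)"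
    unfolding Popr_def using n1 by (simp add: f1 f2 nn field_simps)
  also have "\<dots> = 2 * (real x * real (Sb n (Suc x)) + real y * real (Sb n x)) / (real n * 2 ^ n)"
    by (simp add: algebra_simps)
  also have "\<dots> = 2 * (2 * real n * real (Sb (n-1) x)) / (real n * 2 ^ n)"
    by (simp only: e)
  also have "\<dots> = fr (x, y)" using n1 unfolding f0 p by simp
  finally show ?thesis .
qed

lemma harm: assumes "x \<noteq> y" shows "Popr fr (x, y) = fr (x, y)"
proof (cases "y < x")
  case True then show ?thesis by (rule harm_gt)
next
  case False
  then have "x < y" using assms by simp
  then have "Popr fr (y, x) = fr (y, x)" by (rule harm_gt)
  then show ?thesis by (simp add: Popr_def fr_sym add.commute)
qed

lemma fr_diag: assumes "k \<ge> 1" shows "fr (k, k) = 1"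
proof -
  define N where "N = 2 * k - 1"
  have kN: "k \<le> Suc N" "Suc N - k = k" using assms by (auto simp: N_def)
  have "2 ^ N = (\<Sum>j<k. N choose j) + Sb N k" by (rule Sb_total[OF kN(1)])
  also have "(\<Sum>j<k. N choose j) = Sb N k" using Sb_rev[OF kN(1)] kN(2) by simp
  finally have "real (2 ^ N) = 2 * real (Sb N k)" by simp
  moreover have "2 * k - 1 = N" by (simp add: N_def)
  moreover have "real (Sb N k) > 0" using calculation(1)
    by (metis mult_pos_pos of_nat_0_less_iff zero_less_numeral zero_less_power zero_less_mult_pos)
  ultimately show ?thesis by (simp add: fr_def mult_2[symmetric])
qed

definition cc :: "nat \<Rightarrow> real" where "cc k = real ((2*k) choose k) / 4 ^ k"

lemma Popr_diag: assumes "k \<ge> 1" shows "Popr fr (k, k) = 1 - cc k"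
proof -
  define N where "N = 2 * k"
  have "2 ^ N = (\<Sum>j<Suc k. N choose j) + Sb N (Suc k)" by (rule Sb_total) (simp add: N_def)
  also have "(\<Sum>j<Suc k. N choose j) = (\<Sum>j<k. N choose j) + (N choose k)" by simp
  also have "(\<Sum>j<k. N choose j) = Sb N (Suc k)" using Sb_rev[of k N] by (simp add: N_def)
  finally have e: "real (2 ^ N) = 2 * real (Sb N (Suc k)) + real (N choose k)" by simp
  have "(4::real) ^ k = 2 ^ N" by (simp add: N_def power_mult)
  have f1: "fr (Suc k, k) = 2 * real (Sb N (Suc k)) / 2 ^ N"
  proof -
    have "Suc k + k - 1 = N" "max (Suc k) k = Suc k" by (auto simp: N_def)
    then show ?thesis unfolding fr_def fst_conv snd_conv by metis
  qed
  have kk: "real k / (real k + real k) = 1/2" using assms by (simp add: field_simps)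
  have "Popr fr (k, k) = fr (Suc k, k)"
  proof -
    have "Popr fr (k, k) = 1/2 * fr (Suc k, k) + 1/2 * fr (k, Suc k)"
      unfolding Popr_def fst_conv snd_conv kk by simp
    then show ?thesis using fr_sym[of k "Suc k"] by simp
  qed
  then have "Popr fr (k, k) = 2 * real (Sb N (Suc k)) / 2 ^ N" using f1 by simp
  also have "\<dots> = 1 - cc k"
  proof -
    have e': "(2::real) ^ N = 2 * real (Sb N (Suc k)) + real (N choose k)" using e by simp
    have "1 - cc k = (2 ^ N - real (N choose k)) / 2 ^ N"
      unfolding cc_def \<open>(4::real) ^ k = 2 ^ N\<close> N_def[symmetric] by (simp add: diff_divide_distrib)
    then show ?thesis using e' by simp
  qed
  finally show ?thesis .
qed

lemma fact_ineq_aux: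
  "fact (a+b+1) * fact (a+x') * fact (b+y') \<le> (fact a * fact b * fact (a+b+x'+y'+1) :: nat)"
proof (induction x')
  case 0
  show ?case
  proof (induction y')
    case 0 then show ?case by simp
  next
    case (Suc y')
    have "fact (a+b+1) * fact (a+0) * fact (b + Suc y') = (b + Suc y') * (fact (a+b+1) * fact (a+0) * fact (b + y'))"
      by (simp add: algebra_simps)
    also have "\<dots> \<le> (a+b+0+Suc y'+1) * (fact a * fact b * fact (a+b+0+y'+1))"
      by (intro mult_mono Suc) auto
    also have "\<dots> = fact a * fact b * fact (a+b+0+Suc y'+1)" by (simp add: algebra_simps)
    finally show ?case .
  qed
next
  case (Suc x')
  have "fact (a+b+1) * fact (a+Suc x') * fact (b + y') = (a + Suc x') * (fact (a+b+1) * fact (a+x') * fact (b + y'))"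
    by (simp add: algebra_simps)
  also have "\<dots> \<le> (a+b+Suc x'+y'+1) * (fact a * fact b * fact (a+b+x'+y'+1))"
    by (intro mult_mono Suc) auto
  also have "\<dots> = fact a * fact b * fact (a+b+Suc x'+y'+1)" by (simp add: algebra_simps)
  finally show ?case .
qed

lemma poch_fact: "x \<ge> 1 \<Longrightarrow> pochhammer (real x) a * fact (x - 1) = fact (x + a - 1)"
proof (induction a)
  case 0 then show ?case by simp
next
  case (Suc a)
  have "pochhammer (real x) (Suc a) * fact (x - 1) = (pochhammer (real x) a * fact (x - 1)) * (real x + real a)"
    by (simp add: pochhammer_Suc algebra_simps)
  also have "\<dots> = fact (x + a - 1) * real (x + a)" using Suc by simp
  also have "\<dots> = fact (x + Suc a - 1)"
    using Suc.prems by (metis Suc_diff_le add_Suc_right diff_Suc_1 fact_Suc le_add1 le_trans mult.commute of_nat_fact of_nat_mult)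
  finally show ?case .
qed

definition Cxy :: "nat \<Rightarrow> nat \<Rightarrow> real" where
  "Cxy x y = fact (x + y - 1) / (fact (x - 1) * fact (y - 1))"

lemma w_bound:
  assumes x: "x \<ge> 1" and y: "y \<ge> 1" and a: "a \<le> m"
  shows "w x y m a \<le> Cxy x y / (real m + 1)"
proof -
  define b where "b = m - a"
  have px: "pochhammer (real x) a = fact (x + a - 1) / fact (x - 1)" using poch_fact[OF x] by (simp add: eq_divide_eq)
  have py: "pochhammer (real y) b = fact (y + b - 1) / fact (y - 1)" using poch_fact[OF y] by (simp add: eq_divide_eq)
  have pn: "pochhammer (real x + real y) m = fact (x + y + m - 1) / fact (x + y - 1)"
    using poch_fact[of "x+y" m] x by (simp add: eq_divide_eq)
  have c: "real (m choose a) = fact m / (fact a * fact b)" using a by (simp add: binomial_fact b_def)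
  have key: "fact (a+b+1) * fact (a+(x-1)) * fact (b+(y-1)) \<le> (fact a * fact b * fact (a+b+(x-1)+(y-1)+1) :: nat)"
    by (rule fact_ineq_aux)
  have ab: "a + b = m" using a by (simp add: b_def)
  have e1: "a + (x-1) = x + a - 1" "b + (y-1) = y + b - 1" "a+b+(x-1)+(y-1)+1 = x + y + m - 1" using x y ab by auto
  have key': "fact (m+1) * fact (x + a - 1) * fact (y + b - 1) \<le> (fact a * fact b * fact (x + y + m - 1) :: real)"
  proof -
    have "real (fact (a+b+1) * fact (a+(x-1)) * fact (b+(y-1))) \<le> real (fact a * fact b * fact (a+b+(x-1)+(y-1)+1))"
      using key by (simp only: of_nat_le_iff)
    moreover have "m + (x - 1) + (y - 1) + 1 = x + y + m - 1" using x y by simp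
    ultimately show ?thesis unfolding e1 ab by (simp only: of_nat_mult of_nat_fact)
  qed
  have w: "w x y m a = fact m / (fact a * fact b) * (fact (x + a - 1) / fact (x - 1)) * (fact (y + b - 1) / fact (y - 1))
       / (fact (x + y + m - 1) / fact (x + y - 1))"
    unfolding w_def px c pn b_def[symmetric] py ..
  define Fm Fa Fb Fxa Fyb Fx Fy Fn Fxy where "Fm = (fact m :: real)" and "Fa = (fact a :: real)"
    and "Fb = (fact b :: real)" and "Fxa = (fact (x + a - 1) :: real)" and "Fyb = (fact (y + b - 1) :: real)"
    and "Fx = (fact (x - 1) :: real)" and "Fy = (fact (y - 1) :: real)" and "Fn = (fact (x + y + m - 1) :: real)"
    and "Fxy = (fact (x + y - 1) :: real)"
  have pos: "Fm > 0" "Fa > 0" "Fb > 0" "Fxa > 0" "Fyb > 0" "Fx > 0" "Fy > 0" "Fn > 0" "Fxy > 0"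
    by (simp_all add: Fm_def Fa_def Fb_def Fxa_def Fyb_def Fx_def Fy_def Fn_def Fxy_def)
  have fm1: "(fact (m+1) :: real) = (real m + 1) * Fm" by (simp add: Fm_def algebra_simps)
  have w': "w x y m a = Fm / (Fa * Fb) * (Fxa / Fx) * (Fyb / Fy) / (Fn / Fxy)"
    unfolding w Fm_def Fa_def Fb_def Fxa_def Fyb_def Fx_def Fy_def Fn_def Fxy_def ..
  have key'': "(real m + 1) * Fm * Fxa * Fyb \<le> Fa * Fb * Fn"
    using key' unfolding fm1 Fa_def Fb_def Fxa_def Fyb_def Fn_def .
  have "w x y m a * (real m + 1) = ((real m + 1) * Fm * Fxa * Fyb) / (Fa * Fb * Fn) * (Fxy / (Fx * Fy))"
    unfolding w' using pos by (simp add: field_simps)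
  also have "\<dots> \<le> 1 * (Fxy / (Fx * Fy))"
    using key'' pos by (intro mult_right_mono) (auto simp: divide_le_eq)
  finally have "w x y m a * (real m + 1) \<le> Fxy / (Fx * Fy)" by simp
  then show ?thesis unfolding Cxy_def Fxy_def Fx_def Fy_def by (simp add: le_divide_eq add_pos_nonneg mult_ac)
qed

lemma pascal_sum:
  fixes g :: "nat \<Rightarrow> real"
  shows "(\<Sum>k\<le>Suc N. real (Suc N choose k) * g k) = (\<Sum>k\<le>N. real (N choose k) * (g k + g (Suc k)))"
proof -
  have A: "(\<Sum>k\<le>Suc N. real (N choose k) * g k) = g 0 + (\<Sum>j\<le>N. real (N choose Suc j) * g (Suc j))"
    by (subst sum.atMost_Suc_shift) simp
  have B: "(\<Sum>k\<le>Suc N. real (N choose k) * g k) = (\<Sum>k\<le>N. real (N choose k) * g k)"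
    by simp
  have "(\<Sum>k\<le>Suc N. real (Suc N choose k) * g k) = g 0 + (\<Sum>j\<le>N. real (Suc N choose Suc j) * g (Suc j))"
    by (subst sum.atMost_Suc_shift) simp
  also have "\<dots> = g 0 + (\<Sum>j\<le>N. real (N choose j) * g (Suc j)) + (\<Sum>j\<le>N. real (N choose Suc j) * g (Suc j))"
    by (simp add: sum.distrib algebra_simps)
  also have "\<dots> = (\<Sum>j\<le>N. real (N choose j) * g (Suc j)) + (\<Sum>k\<le>N. real (N choose k) * g k)"
    using A B by simp
  also have "\<dots> = (\<Sum>k\<le>N. real (N choose k) * (g k + g (Suc k)))"
    by (simp add: sum.distrib algebra_simps)
  finally show ?thesis .
qed

lemma variance_sum: "(\<Sum>k\<le>N. real (N choose k) * (2 * real k - real N)^2) = real N * 2 ^ N"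
proof (induction N)
  case 0 then show ?case by simp
next
  case (Suc N)
  have "(\<Sum>k\<le>Suc N. real (Suc N choose k) * (2 * real k - real (Suc N))^2)
     = (\<Sum>k\<le>N. real (N choose k) * ((2 * real k - real (Suc N))^2 + (2 * real (Suc k) - real (Suc N))^2))"
    by (rule pascal_sum)
  also have "\<dots> = (\<Sum>k\<le>N. 2 * (real (N choose k) * (2 * real k - real N)^2) + 2 * real (N choose k))"
    by (intro sum.cong refl) (simp add: power2_eq_square algebra_simps)
  also have "\<dots> = 2 * (real N * 2 ^ N) + 2 * 2 ^ N"
    by (simp add: sum.distrib sum_distrib_left[symmetric] Suc.IH of_nat_sum[symmetric] choose_row_sum)
  also have "\<dots> = real (Suc N) * 2 ^ Suc N" by (simp add: algebra_simps)
  finally show ?case .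
qed

lemma cheb:
  assumes "N \<le> 2 * m"
  shows "real (Sb N m) * (2 * real m - real N)^2 \<le> real N * 2 ^ N"
proof -
  have "real (Sb N m) * (2 * real m - real N)^2 = (\<Sum>k\<in>{m..N}. real (N choose k) * (2 * real m - real N)^2)"
    by (simp add: Sb_def sum_distrib_right)
  also have "\<dots> \<le> (\<Sum>k\<in>{m..N}. real (N choose k) * (2 * real k - real N)^2)"
    using assms by (intro sum_mono mult_left_mono power_mono) auto
  also have "\<dots> \<le> (\<Sum>k\<le>N. real (N choose k) * (2 * real k - real N)^2)"
    by (intro sum_mono2) auto
  finally show ?thesis by (simp add: variance_sum)
qed

lemma fr_cheb:
  assumes "X + Y \<ge> 1"
  shows "fr (X, Y) * (\<bar>real X - real Y\<bar> + 1)^2 \<le> 2 * (real X + real Y)"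
proof -
  define N where "N = X + Y - 1"
  define m where "m = max X Y"
  have Nm: "N \<le> 2 * m" using assms by (simp add: N_def m_def)
  have d: "2 * real m - real N = \<bar>real X - real Y\<bar> + 1" using assms by (simp add: N_def m_def max_def)
  have c: "real (Sb N m) * (\<bar>real X - real Y\<bar> + 1)^2 \<le> real N * 2 ^ N" using cheb[OF Nm] d by simp
  have "fr (X, Y) * (\<bar>real X - real Y\<bar> + 1)^2 = 2 * (real (Sb N m) * (\<bar>real X - real Y\<bar> + 1)^2) / 2 ^ N"
    by (simp add: fr_def N_def m_def)
  also have "\<dots> \<le> 2 * (real N * 2 ^ N) / 2 ^ N"
    using c by (intro divide_right_mono mult_left_mono) auto
  also have "\<dots> = 2 * real N" by simp
  also have "\<dots> \<le> 2 * (real X + real Y)" by (simp add: N_def)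
  finally show ?thesis .
qed

definition Fe :: "nat \<times> nat \<Rightarrow> ennreal" where "Fe z = ennreal (fr z)"

lemma Ef_const1: "Ef (\<lambda>_. 1) z m = 1"
  by (simp add: Ef_def space_ca_nonempty)

lemma w_sum1: assumes "x + y > 0" shows "(\<Sum>a\<le>m. w x y m a) = 1"
proof -
  have "ennreal (\<Sum>a\<le>m. w x y m a) = (\<Sum>a\<le>m. ennreal (w x y m a) * 1)"
    by (simp add: w_nonneg)
  also have "\<dots> = Ef (\<lambda>_. 1) (x, y) m" using Ef_sum[OF assms, of "\<lambda>_. 1" m] by simp
  finally show ?thesis using Ef_const1 by (simp add: sum_nonneg w_nonneg)
qed

definition Rsum :: "nat \<Rightarrow> nat \<Rightarrow> nat \<Rightarrow> real" where
  "Rsum x y m = (\<Sum>a\<le>m. w x y m a * fr (x + a, y + (m - a)))"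

lemma Ef_Fe: assumes "x + y > 0" shows "Ef Fe (x, y) m = ennreal (Rsum x y m)"
  unfolding Ef_sum[OF assms] Rsum_def Fe_def
  by (subst sum_ennreal[symmetric]) (auto simp: ennreal_mult w_nonneg fr_nonneg)

lemma card_near:
  fixes c :: int
  shows "card {a\<in>{..m::nat}. \<bar>2 * int a - c\<bar> \<le> int K} \<le> 2 * K + 1"
proof -
  let ?A = "{a\<in>{..m::nat}. \<bar>2 * int a - c\<bar> \<le> int K}"
  let ?h = "\<lambda>a. nat (2 * int a - c + int K)"
  have "inj_on ?h ?A" by (rule inj_onI) auto
  moreover have "?h ` ?A \<subseteq> {0..2*K}" by auto
  ultimately have "card ?A \<le> card {0..2*K}" by (intro card_inj_on_le) auto
  then show ?thesis by simp
qed

lemma Rsum_bound: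
  assumes x: "x \<ge> 1" and y: "y \<ge> 1"
  shows "Rsum x y m \<le> 2 * (2 * real K + 1) * Cxy x y / (real m + 1) + 2 * (real x + real y + real m) / (real K + 1)^2"
proof -
  define c :: int where "c = int y + int m - int x"
  define A where "A = {a\<in>{..m::nat}. \<bar>2 * int a - c\<bar> \<le> int K}"
  define n :: real where "n = real x + real y + real m"
  have cardA: "card A \<le> 2 * K + 1" unfolding A_def by (rule card_near)
  have trm: "w x y m a * fr (x + a, y + (m - a)) \<le> (if a \<in> A then 2 * Cxy x y / (real m + 1) else 0)
      + w x y m a * (2 * n / (real K + 1)^2)" if a: "a \<le> m" for a
  proof (cases "a \<in> A")
    case True
    have "w x y m a * fr (x + a, y + (m - a)) \<le> Cxy x y / (real m + 1) * 2"
      by (intro mult_mono w_bound x y a fr_le2) (auto simp: w_nonneg fr_nonneg Cxy_def)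
    moreover have "0 \<le> w x y m a * (2 * n / (real K + 1)^2)" by (simp add: w_nonneg n_def)
    ultimately show ?thesis using True by (simp add: mult.commute)
  next
    case False
    define X where "X = x + a"
    define Y where "Y = y + (m - a)"
    have XY: "real X + real Y = n" using a by (simp add: X_def Y_def n_def)
    have D: "\<bar>real X - real Y\<bar> = real_of_int \<bar>2 * int a - c\<bar>"
      using a by (simp add: X_def Y_def c_def of_nat_diff)
    have "\<bar>2 * int a - c\<bar> > int K" using False a by (simp add: A_def)
    then have "int K + 1 \<le> \<bar>2 * int a - c\<bar>" by simp
    then have "real_of_int (int K + 1) \<le> real_of_int \<bar>2 * int a - c\<bar>" by (simp only: of_int_le_iff)
    then have DK: "\<bar>real X - real Y\<bar> \<ge> real K + 1" unfolding D by simp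
    have ch: "fr (X, Y) * (\<bar>real X - real Y\<bar> + 1)^2 \<le> 2 * n"
      using fr_cheb[of X Y] x XY by (simp add: X_def)
    have "fr (X, Y) * (real K + 1)^2 \<le> fr (X, Y) * (\<bar>real X - real Y\<bar> + 1)^2"
      using DK by (intro mult_left_mono power_mono) (auto simp: fr_nonneg)
    with ch have "fr (X, Y) \<le> 2 * n / (real K + 1)^2"
      by (simp add: le_divide_eq add_pos_nonneg)
    then have "w x y m a * fr (X, Y) \<le> w x y m a * (2 * n / (real K + 1)^2)"
      by (intro mult_left_mono w_nonneg)
    then show ?thesis using False by (simp add: X_def Y_def)
  qed
  have "Rsum x y m \<le> (\<Sum>a\<le>m. (if a \<in> A then 2 * Cxy x y / (real m + 1) else 0)
      + w x y m a * (2 * n / (real K + 1)^2))"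
    unfolding Rsum_def by (intro sum_mono trm) auto
  also have "\<dots> = real (card A) * (2 * Cxy x y / (real m + 1)) + 2 * n / (real K + 1)^2"
  proof -
    have "(\<Sum>a\<le>m. (if a \<in> A then 2 * Cxy x y / (real m + 1) else 0)) = real (card A) * (2 * Cxy x y / (real m + 1))"
    proof -
      have "{..m} \<inter> A = A" by (auto simp: A_def)
      then show ?thesis by (simp add: sum.If_cases)
    qed
    moreover have "(\<Sum>a\<le>m. w x y m a * (2 * n / (real K + 1)^2)) = 2 * n / (real K + 1)^2"
      using w_sum1[of x y m] x by (simp add: sum_distrib_right[symmetric] del: times_divide_eq_right)
    ultimately show ?thesis by (simp add: sum.distrib)
  qed
  also have "\<dots> \<le> real (2 * K + 1) * (2 * Cxy x y / (real m + 1)) + 2 * n / (real K + 1)^2"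
    using cardA by (intro add_right_mono mult_right_mono) (auto simp: Cxy_def)
  finally show ?thesis by (simp add: n_def algebra_simps)
qed

lemma vanish:
  assumes x: "x \<ge> 1" and y: "y \<ge> 1" and e: "e > 0"
  shows "\<exists>m. Ef Fe (x, y) m \<le> ennreal e"
proof -
  define C where "C = Cxy x y"
  define s where "s = real x + real y"
  have lim: "(\<lambda>j::nat. 2 * (2 * (real j)^2 + 1) * C / (real j ^ 3 + 1) + 2 * (s + real j ^ 3) / ((real j)^2 + 1)^2)
     \<longlonglongrightarrow> 0"
    by real_asymp
  then obtain j where j: "2 * (2 * (real j)^2 + 1) * C / (real j ^ 3 + 1) + 2 * (s + real j ^ 3) / ((real j)^2 + 1)^2 < e"
  proof -
    have "eventually (\<lambda>j::nat. 2 * (2 * (real j)^2 + 1) * C / (real j ^ 3 + 1) + 2 * (s + real j ^ 3) / ((real j)^2 + 1)^2 < e) sequentially"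
      using order_tendstoD(2)[OF lim e] .
    then show ?thesis using that by (auto simp: eventually_sequentially)
  qed
  have "Rsum x y (j^3) \<le> 2 * (2 * real (j^2) + 1) * Cxy x y / (real (j^3) + 1) + 2 * (real x + real y + real (j^3)) / (real (j^2) + 1)^2"
    by (rule Rsum_bound[OF x y])
  also have "\<dots> < e" using j by (simp add: C_def s_def add_ac)
  finally have "Rsum x y (j^3) \<le> e" by simp
  then show ?thesis using Ef_Fe[of x y "j^3"] x by (intro exI[of _ "j^3"]) (simp add: ennreal_leI)
qed

lemma cc_bounds: "0 \<le> cc k" "cc k \<le> 1"
proof -
  show "0 \<le> cc k" by (simp add: cc_def)
  have "(2*k) choose k \<le> (\<Sum>j\<le>2*k. (2*k) choose j)" by (rule member_le_sum) auto
  then have "(2*k) choose k \<le> 2 ^ (2*k)" by (simp add: choose_row_sum)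
  then have "real ((2*k) choose k) \<le> real (2 ^ (2*k))" by (simp only: of_nat_le_iff)
  then have "real ((2*k) choose k) \<le> 4 ^ k" by (simp add: power_mult)
  then show "cc k \<le> 1" by (simp add: cc_def)
qed

definition dl :: "nat \<times> nat \<Rightarrow> ennreal" where
  "dl z = ennreal (if tie z then cc (fst z) else 0)"

lemma Fe_decomp: assumes "fst z \<ge> 1" "snd z \<ge> 1" shows "Fe z = Pop Fe z + dl z"
proof (cases "tie z")
  case False
  obtain x y where z: "z = (x, y)" by (cases z)
  have "Pop Fe z = ennreal (Popr fr z)" unfolding Fe_def by (rule Pop_real) (rule fr_nonneg)
  also have "\<dots> = Fe z" using False harm[of x y] by (simp add: z Fe_def)
  finally show ?thesis using False by (simp add: dl_def)
next
  case True
  obtain k where z: "z = (k, k)" using True by (cases z) auto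
  have k: "k \<ge> 1" using assms z by simp
  have "Pop Fe z = ennreal (Popr fr z)" unfolding Fe_def by (rule Pop_real) (rule fr_nonneg)
  also have "\<dots> = ennreal (1 - cc k)" using Popr_diag[OF k] by (simp add: z)
  finally have "Pop Fe z + dl z = ennreal (1 - cc k) + ennreal (cc k)" by (simp add: dl_def z)
  also have "\<dots> = ennreal 1" using cc_bounds[of k] by (subst ennreal_plus[symmetric]) auto
  finally show ?thesis using fr_diag[OF k] by (simp add: Fe_def z)
qed

lemma Ef_cong_good:
  assumes "x \<ge> 1" "y \<ge> 1" and "\<And>z. fst z \<ge> 1 \<Longrightarrow> snd z \<ge> 1 \<Longrightarrow> \<phi> z = \<psi> z"
  shows "Ef \<phi> (x, y) t = Ef \<psi> (x, y) t"
  using assms by (simp add: Ef_sum)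

lemma Ef_step_dec:
  assumes x: "x \<ge> 1" and y: "y \<ge> 1"
  shows "Ef Fe (x, y) t = Ef Fe (x, y) (Suc t) + Ef dl (x, y) t"
proof -
  have "Ef Fe (x, y) t = Ef (\<lambda>z. Pop Fe z + dl z) (x, y) t"
    using x y by (rule Ef_cong_good) (rule Fe_decomp)
  also have "\<dots> = Ef (Pop Fe) (x, y) t + Ef dl (x, y) t" by (rule Ef_add)
  also have "Ef (Pop Fe) (x, y) t = Ef Fe (x, y) (Suc t)" using x by (simp add: Ef_Suc')
  finally show ?thesis .
qed

lemma hitA_Fe: "x \<ge> 1 \<Longrightarrow> y \<ge> 1 \<Longrightarrow> hitA (x, y) t = Ef Fe (x, y) t"
proof (rule hitA_eq_F)
  fix z :: "nat \<times> nat" assume z: "fst z \<ge> 1 \<and> snd z \<ge> 1" "\<not> tie z"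
  then show "Pop Fe z = Fe z" using Fe_decomp[of z] by (simp add: dl_def)
next
  fix z :: "nat \<times> nat" assume "fst z \<ge> 1" "tie z"
  then show "Fe z = 1" using fr_diag[of "fst z"] by (cases z) (simp add: Fe_def)
next
  fix z :: "nat \<times> nat" and e :: real assume "fst z \<ge> 1 \<and> snd z \<ge> 1" "e > 0"
  then show "\<exists>m. Ef Fe z m \<le> ennreal e" using vanish[of "fst z" "snd z" e] by simp
qed simp

definition Dr :: "nat \<Rightarrow> nat \<Rightarrow> nat \<Rightarrow> real" where
  "Dr x y t = (\<Sum>a\<le>t. w x y t a * (if x + a = y + (t - a) then cc (x + a) else 0))"

lemma dl_simp: "dl (a, b) = ennreal (if a = b then cc a else 0)" by (simp add: dl_def)

lemma Ef_dl: assumes "x + y > 0" shows "Ef dl (x, y) t = ennreal (Dr x y t)"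
  unfolding Ef_sum[OF assms] Dr_def dl_simp
  by (subst sum_ennreal[symmetric]) (auto simp: ennreal_mult w_nonneg cc_bounds)

lemma Dr_nonneg: "Dr x y t \<ge> 0"
  unfolding Dr_def by (intro sum_nonneg) (auto simp: w_nonneg cc_bounds)

lemma Rsum_nonneg: "Rsum x y t \<ge> 0"
  unfolding Rsum_def by (intro sum_nonneg) (auto simp: w_nonneg fr_nonneg)

lemma Rsum_dec:
  assumes x: "x \<ge> 1" and y: "y \<ge> 1"
  shows "Rsum x y t = Rsum x y (Suc t) + Dr x y t"
proof -
  have p: "x + y > 0" using x by simp
  have "ennreal (Rsum x y t) = ennreal (Rsum x y (Suc t)) + ennreal (Dr x y t)"
    using Ef_step_dec[OF x y, of t] by (simp add: Ef_Fe[OF p] Ef_dl[OF p])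
  also have "\<dots> = ennreal (Rsum x y (Suc t) + Dr x y t)"
    by (simp add: Rsum_nonneg Dr_nonneg)
  finally show ?thesis
    by (subst (asm) ennreal_inj) (auto simp: Rsum_nonneg Dr_nonneg add_nonneg_nonneg)
qed

lemma Rsum_lim:
  assumes x: "x \<ge> 1" and y: "y \<ge> 1"
  shows "Rsum x y \<longlonglongrightarrow> 0"
proof -
  have dec: "decseq (Rsum x y)"
    by (rule decseq_SucI) (metis Rsum_dec[OF x y] Dr_nonneg le_add_same_cancel1)
  show ?thesis
  proof (rule order_tendstoI)
    fix e :: real assume e: "e > 0"
    obtain m where m: "Ef Fe (x, y) m \<le> ennreal (e/2)" using vanish[OF x y, of "e/2"] e by auto
    then have "Rsum x y m \<le> e/2" using Ef_Fe[of x y m] x e by (simp add: ennreal_le_iff Rsum_nonneg)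
    then have "\<forall>n\<ge>m. Rsum x y n < e" using dec e by (metis decseqD half_gt_zero less_le_trans linorder_not_le order_trans field_sum_of_halves less_add_same_cancel1 )
    then show "eventually (\<lambda>n. Rsum x y n < e) sequentially" by (auto simp: eventually_sequentially)
  next
    fix e :: real assume "e < 0"
    then show "eventually (\<lambda>n. e < Rsum x y n) sequentially" using Rsum_nonneg
      by (intro always_eventually) (metis less_le_trans)
  qed
qed

lemma Rsum_tail:
  assumes x: "x \<ge> 1" and y: "y \<ge> 1"
  shows "(\<lambda>s. Dr x y (s + t)) sums Rsum x y t"
proof -
  have "(\<lambda>n. (\<Sum>s<n. Dr x y (s + t))) \<longlonglongrightarrow> Rsum x y t - 0"
  proof -
    have e: "(\<Sum>s<n. Dr x y (s + t)) = Rsum x y t - Rsum x y (n + t)" for n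
      by (induction n) (auto simp: Rsum_dec[OF x y, of "n + t" for n] algebra_simps)
    have "(\<lambda>n. Rsum x y (n + t)) \<longlonglongrightarrow> 0"
      using Rsum_lim[OF x y] by (rule LIMSEQ_ignore_initial_segment[where k=t, simplified add.commute])
    then show ?thesis unfolding e by (intro tendsto_diff tendsto_const)
  qed
  then show ?thesis by (simp add: sums_def)
qed

lemma last_tie_ge_iff:
  "(last_tie 1 x0 y0 \<omega> \<ge> ereal (real t)) = (\<exists>s\<ge>t. tie (pth (x0, y0) \<omega> s))"
proof
  assume "\<exists>s\<ge>t. tie (pth (x0, y0) \<omega> s)"
  then obtain s where s: "s \<ge> t" "tie (pth (x0, y0) \<omega> s)" by blast
  have "ereal (real s) \<le> last_tie 1 x0 y0 \<omega>"
    unfolding last_tie_def using s(2) by (intro Sup_upper) (auto simp: pth_def)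
  moreover have "ereal (real t) \<le> ereal (real s)" using s(1) by simp
  ultimately show "last_tie 1 x0 y0 \<omega> \<ge> ereal (real t)" by (rule order_trans[rotated])
next
  assume ge: "last_tie 1 x0 y0 \<omega> \<ge> ereal (real t)"
  show "\<exists>s\<ge>t. tie (pth (x0, y0) \<omega> s)"
  proof (rule ccontr)
    assume no: "\<not> (\<exists>s\<ge>t. tie (pth (x0, y0) \<omega> s))"
    show False
    proof (cases "t = 0")
      case True
      then have "{ereal (real s) | s. fst (ca_path 1 x0 y0 \<omega> s) = snd (ca_path 1 x0 y0 \<omega> s)} = {}"
        using no by (auto simp: pth_def)
      then have "last_tie 1 x0 y0 \<omega> = -\<infinity>" by (simp add: last_tie_def bot_ereal_def)
      then show False using ge by simp
    next
      case False
      have "last_tie 1 x0 y0 \<omega> \<le> ereal (real t - 1)"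
        unfolding last_tie_def
      proof (rule Sup_least)
        fix u assume "u \<in> {ereal (real s) | s. fst (ca_path 1 x0 y0 \<omega> s) = snd (ca_path 1 x0 y0 \<omega> s)}"
        then obtain s where u: "u = ereal (real s)" and s: "tie (pth (x0, y0) \<omega> s)" by (auto simp: pth_def)
        then have "s < t" using no by (meson not_le)
        then show "u \<le> ereal (real t - 1)" using u by simp
      qed
      with ge have "ereal (real t) \<le> ereal (real t - 1)" by (rule order_trans)
      then show False by simp
    qed
  qed
qed

lemma measure_eq_Rsum:
  assumes "x0 \<ge> 1" "y0 \<ge> 1"
  shows "measure ca_space {\<omega> \<in> space ca_space. last_tie 1 x0 y0 \<omega> \<ge> ereal (real t)} = Rsum x0 y0 t"
proof -
  have "{\<omega> \<in> space ca_space. last_tie 1 x0 y0 \<omega> \<ge> ereal (real t)}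
      = {\<omega> \<in> space ca_space. \<exists>s\<ge>t. tie (pth (x0, y0) \<omega> s)}"
    by (simp add: last_tie_ge_iff)
  then have "emeasure ca_space {\<omega> \<in> space ca_space. last_tie 1 x0 y0 \<omega> \<ge> ereal (real t)} = ennreal (Rsum x0 y0 t)"
    using assms by (simp add: hitA_def[symmetric] hitA_Fe Ef_Fe)
  then show ?thesis by (simp add: measure_def Rsum_nonneg)
qed

lemma cc_Suc: "cc (Suc k) = cc k * ((2 * real k + 1) / (2 * real k + 2))"
proof -
  have c1: "real ((2*k) choose k) = fact (2*k) / (fact k * fact k)"
    using binomial_fact[of k "2*k"] by simp
  have c2: "real ((2*Suc k) choose Suc k) = fact (2*k+2) / (fact (Suc k) * fact (Suc k))"
    using binomial_fact[of "Suc k" "2*Suc k"] by simp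
  have f2: "(fact (2*k+2) :: real) = (2 * real k + 2) * (2 * real k + 1) * fact (2*k)"
  proof -
    have "(fact (2*k+2) :: real) = fact (Suc (Suc (2*k)))" by (simp add: add_ac)
    also have "\<dots> = real (Suc (Suc (2*k))) * (real (Suc (2*k)) * fact (2*k))" by (simp only: fact_Suc)
    finally show ?thesis by (simp add: algebra_simps)
  qed
  have f1: "(fact (Suc k) :: real) = (real k + 1) * fact k" by (simp only: fact_Suc) simp
  define A where "A = (fact (2*k) :: real)"
  define B where "B = (fact k :: real)"
  have AB: "A > 0" "B > 0" by (simp_all add: A_def B_def)
  have "cc (Suc k) = ((2 * real k + 2) * (2 * real k + 1) * A) / (((real k + 1) * B) * ((real k + 1) * B)) / (4 * 4 ^ k)"
    unfolding cc_def c2 f2 f1 A_def B_def by simp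
  also have "\<dots> = (A / (B * B) / 4 ^ k) * ((2 * real k + 1) / (2 * real k + 2))"
  proof -
    define r where "r = real k + 1"
    have r: "r > 0" by (simp add: r_def)
    have e1: "2 * real k + 2 = 2 * r" "real k + 1 = r" by (simp_all add: r_def)
    show ?thesis unfolding e1 using AB r by (simp add: field_simps)
  qed
  also have "\<dots> = cc k * ((2 * real k + 1) / (2 * real k + 2))"
    unfolding cc_def c1 A_def B_def ..
  finally show ?thesis .
qed

lemma cc_poch: "cc k = pochhammer (1/2::real) k / fact k"
proof (induction k)
  case 0 then show ?case by (simp add: cc_def)
next
  case (Suc k)
  have "pochhammer (1/2::real) (Suc k) / fact (Suc k) = (pochhammer (1/2) k / fact k) * ((1/2 + real k) / (real k + 1))"
    by (simp only: pochhammer_Suc fact_Suc) (simp add: field_simps)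
  also have "\<dots> = cc (Suc k)" unfolding cc_Suc Suc.IH[symmetric]
    by (simp add: field_simps)
  finally show ?case ..
qed

lemma cc_asymp: "(\<lambda>k. cc k * sqrt (real k)) \<longlonglongrightarrow> 1 / sqrt pi"
proof -
  have lim: "(\<lambda>n. ((-1/2::real) gchoose n) / ((-1)^n / exp ((-1/2 + 1) * of_real (ln (real n)))))
      \<longlonglongrightarrow> inverse (Gamma (- (-1/2::real)))"
    by (rule gbinomial_asymptotic)
  have g: "inverse (Gamma (- (-1/2::real))) = 1 / sqrt pi"
  proof -
    have e: "- (-1/2::real) = 1/2" by simp
    show ?thesis by (simp only: e Gamma_one_half_real inverse_eq_divide)
  qed
  have ev: "eventually (\<lambda>n. ((-1/2::real) gchoose n) / ((-1)^n / exp ((-1/2 + 1) * of_real (ln (real n))))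
      = cc n * sqrt (real n)) sequentially"
    using eventually_gt_at_top[of "0::nat"]
  proof eventually_elim
    case (elim n)
    have "((-1/2::real) gchoose n) = (-1)^n * cc n"
    proof -
      have e: "- (-1/2::real) = 1/2" by simp
      show ?thesis by (simp only: gbinomial_pochhammer e cc_poch times_divide_eq_right)
    qed
    moreover have "exp ((-1/2 + 1) * ln (real n)) = sqrt (real n)"
    proof -
      have e2: "(-1/2::real) + 1 = 1/2" by simp
      have "exp (1/2 * ln (real n)) = real n powr (1/2)" using elim by (simp add: powr_def)
      also have "\<dots> = sqrt (real n)" by (simp add: powr_half_sqrt)
      finally show ?thesis by (simp only: e2)
    qed
    ultimately show ?case by (simp add: divide_simps)
  qed
  show ?thesis using Lim_transform_eventually[OF lim ev] unfolding g .
qed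

definition rb :: "nat \<Rightarrow> nat \<Rightarrow> nat \<Rightarrow> real" where
  "rb x y k = real ((2*k - x - y) choose (k - x)) / real ((2*k) choose k)"

lemma rb_step_x:
  assumes "k > x + y"
  shows "rb (Suc x) y k = rb x y k * ((real k - real x) / (2 * real k - real x - real y))"
proof -
  define N where "N = 2*k - Suc x - y"
  define j where "j = k - Suc x"
  have NN: "2*k - x - y = Suc N" "k - x = Suc j" using assms by (auto simp: N_def j_def)
  have ab: "Suc j * (Suc N choose Suc j) = Suc N * (N choose j)" by (rule Suc_times_binomial)
  have r1: "real (Suc N) = 2 * real k - real x - real y" "real (Suc j) = real k - real x"
    using assms by (auto simp: N_def j_def of_nat_diff)
  have pos: "real (Suc N) > 0" by simp
  have abr: "real (Suc j) * real (Suc N choose Suc j) = real (Suc N) * real (N choose j)"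
    by (simp only: of_nat_mult[symmetric] ab)
  have h: "real (N choose j) = real (Suc N choose Suc j) * real (Suc j) / real (Suc N)"
    using abr pos by (simp add: field_simps del: binomial_Suc_Suc)
  have g: "\<And>a b c d. (a::real) * b / c / d = a / d * (b / c)" by (simp add: divide_inverse ac_simps)
  show ?thesis unfolding rb_def NN N_def[symmetric] j_def[symmetric] r1[symmetric] h
    by (rule g)
qed

lemma rb_step_y:
  assumes "k > x + y"
  shows "rb x (Suc y) k = rb x y k * ((real k - real y) / (2 * real k - real x - real y))"
proof -
  define N where "N = 2*k - x - y"
  define j where "j = k - x"
  have NN: "2*k - x - Suc y = N - 1" using assms by (auto simp: N_def)
  have ab: "(N - j) * (N choose j) = N * ((N - 1) choose j)" by (rule binomial_absorb_comp)
  have r1: "real N = 2 * real k - real x - real y" "real (N - j) = real k - real y"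
    using assms by (auto simp: N_def j_def of_nat_diff)
  have pos: "real N > 0" using assms by (simp add: N_def)
  have abr: "real (N - j) * real (N choose j) = real N * real ((N - 1) choose j)"
    by (simp only: of_nat_mult[symmetric] ab)
  have h: "real ((N - 1) choose j) = real (N choose j) * real (N - j) / real N"
    using abr pos by (simp add: field_simps)
  have g: "\<And>a b c d. (a::real) * b / c / d = a / d * (b / c)" by (simp add: divide_inverse ac_simps)
  show ?thesis unfolding rb_def NN N_def[symmetric] j_def[symmetric] r1[symmetric] h
    by (rule g)
qed

lemma half_lim1: "(\<lambda>k::nat. (real k - real x) / (2 * real k - real x - real y)) \<longlonglongrightarrow> 1/2"
  by real_asymp

lemma half_lim2: "(\<lambda>k::nat. (real k - real y) / (2 * real k - real x - real y)) \<longlonglongrightarrow> 1/2"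
  by real_asymp

lemma rb_lim: "rb x y \<longlonglongrightarrow> 1 / 2 ^ (x + y)"
proof (induction x arbitrary: y)
  case 0
  show ?case
  proof (induction y)
    case 0 then show ?case by (simp add: rb_def)
  next
    case (Suc y)
    have l: "(\<lambda>k. rb 0 y k * ((real k - real y) / (2 * real k - real 0 - real y))) \<longlonglongrightarrow> 1 / 2 ^ (0 + y) * (1/2)"
      using Suc half_lim2[of y 0] by (intro tendsto_mult) auto
    have e: "1 / 2 ^ (0 + y) * (1/2) = (1 / 2 ^ (0 + Suc y) :: real)" by simp
    have ev: "eventually (\<lambda>k. rb 0 y k * ((real k - real y) / (2 * real k - real 0 - real y)) = rb 0 (Suc y) k) sequentially"
      using eventually_gt_at_top[of "0 + y"] by eventually_elim (simp add: rb_step_y)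
    show ?case using Lim_transform_eventually[OF l[unfolded e] ev] .
  qed
next
  case (Suc x)
  have l: "(\<lambda>k. rb x y k * ((real k - real x) / (2 * real k - real x - real y))) \<longlonglongrightarrow> 1 / 2 ^ (x + y) * (1/2)"
    using Suc half_lim1[of x y] by (intro tendsto_mult) auto
  have e: "1 / 2 ^ (x + y) * (1/2) = (1 / 2 ^ (Suc x + y) :: real)" by simp
  have ev: "eventually (\<lambda>k. rb x y k * ((real k - real x) / (2 * real k - real x - real y)) = rb (Suc x) y k) sequentially"
    using eventually_gt_at_top[of "x + y"] by eventually_elim (simp add: rb_step_x)
  show ?case using Lim_transform_eventually[OF l[unfolded e] ev] .
qed

lemma Dr_odd: assumes "odd (t + x0 + y0)" shows "Dr x0 y0 t = 0"
  unfolding Dr_def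
proof (rule sum.neutral, intro ballI)
  fix a assume a: "a \<in> {..t}"
  have "x0 + a \<noteq> y0 + (t - a)"
  proof
    assume "x0 + a = y0 + (t - a)"
    then have "t + x0 + y0 = 2 * (x0 + a)" using a by auto
    then show False using assms by presburger
  qed
  then show "w x0 y0 t a * (if x0 + a = y0 + (t - a) then cc (x0 + a) else 0) = 0" by simp
qed

lemma Dr_even:
  assumes "k \<ge> x0" "k \<ge> y0"
  shows "Dr x0 y0 (2*k - x0 - y0) = w x0 y0 (2*k - x0 - y0) (k - x0) * cc k"
proof -
  define t where "t = 2*k - x0 - y0"
  have "Dr x0 y0 t = (\<Sum>a\<le>t. if a = k - x0 then w x0 y0 t a * cc k else 0)"
    unfolding Dr_def
  proof (intro sum.cong refl)
    fix a assume "a \<in> {..t}"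
    then have a: "a \<le> t" by simp
    have "(x0 + a = y0 + (t - a)) = (a = k - x0)" using a assms by (auto simp: t_def)
    then show "w x0 y0 t a * (if x0 + a = y0 + (t - a) then cc (x0 + a) else 0) = (if a = k - x0 then w x0 y0 t a * cc k else 0)"
      using assms by auto
  qed
  also have "\<dots> = w x0 y0 t (k - x0) * cc k" using assms by (simp add: t_def)
  finally show ?thesis by (simp add: t_def)
qed

definition Ek :: "nat \<Rightarrow> nat \<Rightarrow> nat \<Rightarrow> real" where
  "Ek x0 y0 k = Dr x0 y0 (2*k - x0 - y0)"

lemma Ek_formula:
  assumes x: "x0 \<ge> 1" and y: "y0 \<ge> 1" and k: "k \<ge> x0" "k \<ge> y0"
  shows "Ek x0 y0 k = 2 * Cxy x0 y0 / real k * rb x0 y0 k * cc k"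
proof -
  define t where "t = 2*k - x0 - y0"
  define a where "a = k - x0"
  have ta: "t - a = k - y0" using k by (simp add: t_def a_def)
  have k1: "k \<ge> 1" using k x by simp
  have px: "pochhammer (real x0) a = fact (k - 1) / fact (x0 - 1)"
    using poch_fact[OF x, of a] k by (simp add: eq_divide_eq a_def)
  have py: "pochhammer (real y0) (k - y0) = fact (k - 1) / fact (y0 - 1)"
    using poch_fact[OF y, of "k - y0"] k by (simp add: eq_divide_eq)
  have pn: "pochhammer (real x0 + real y0) t = fact (2*k - 1) / fact (x0 + y0 - 1)"
    using poch_fact[of "x0+y0" t] x k by (simp add: eq_divide_eq t_def)
  define F1 where "F1 = (fact (k - 1) :: real)"
  define F2 where "F2 = (fact (2*k - 1) :: real)"
  have fk: "(fact k :: real) = real k * F1" using k1 unfolding F1_def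
    by (metis Suc_diff_1 fact_Suc less_le_trans zero_less_one le_refl of_nat_Suc of_nat_fact less_eq_Suc_le)
  have f2k: "(fact (2*k) :: real) = 2 * real k * F2"
  proof -
    have e: "2*k = Suc (2*k-1)" using k1 by simp
    have "(fact (Suc (2*k-1)) :: real) = real (Suc (2*k-1)) * fact (2*k-1)" by (rule fact_Suc)
    then show ?thesis unfolding F2_def using k1 by (simp only: e[symmetric])
  qed
  have ccv: "cc k = real ((2*k) choose k) / 4 ^ k" by (simp add: cc_def)
  have cbin: "real ((2*k) choose k) = fact (2*k) / (fact k * fact k)"
    using binomial_fact[of k "2*k"] by simp
  have w: "w x0 y0 t a = real (t choose a) * Cxy x0 y0 * (F1 * F1 / F2)"
    unfolding w_def px ta py pn Cxy_def F1_def F2_def by (simp add: field_simps)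
  have F: "F1 > 0" "F2 > 0" by (simp_all add: F1_def F2_def)
  have "Ek x0 y0 k = w x0 y0 t a * cc k" unfolding Ek_def t_def a_def using Dr_even[OF k] by simp
  also have "\<dots> = real (t choose a) * Cxy x0 y0 * (F1 * F1 / F2) * (2 * real k * F2 / (real k * F1 * (real k * F1))) / 4 ^ k"
    unfolding w ccv cbin fk f2k by simp
  also have "\<dots> = 2 * Cxy x0 y0 / real k * (real (t choose a) / real ((2*k) choose k)) * (real ((2*k) choose k) / 4 ^ k)"
  proof -
    have b: "real ((2*k) choose k) > 0" by simp
    show ?thesis using F k1 b by (simp add: field_simps)
  qed
  also have "\<dots> = 2 * Cxy x0 y0 / real k * rb x0 y0 k * cc k"
    by (simp add: rb_def t_def a_def cc_def)
  finally show ?thesis .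
qed

definition K0 :: "nat \<Rightarrow> nat \<Rightarrow> real" where
  "K0 x0 y0 = 2 * Cxy x0 y0 / 2 ^ (x0 + y0) / sqrt pi"

lemma Ek_lim:
  assumes x: "x0 \<ge> 1" and y: "y0 \<ge> 1"
  shows "(\<lambda>k. Ek x0 y0 k * real k powr (3/2)) \<longlonglongrightarrow> K0 x0 y0"
proof -
  have l: "(\<lambda>k. 2 * Cxy x0 y0 * rb x0 y0 k * (cc k * sqrt (real k))) \<longlonglongrightarrow> 2 * Cxy x0 y0 * (1 / 2 ^ (x0 + y0)) * (1 / sqrt pi)"
    by (intro tendsto_mult tendsto_const rb_lim cc_asymp)
  have ev: "eventually (\<lambda>k. 2 * Cxy x0 y0 * rb x0 y0 k * (cc k * sqrt (real k)) = Ek x0 y0 k * real k powr (3/2)) sequentially"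
    using eventually_ge_at_top[of "max x0 y0"]
  proof eventually_elim
    case (elim k)
    then have k: "k \<ge> x0" "k \<ge> y0" by auto
    have k1: "real k > 0" using k x by simp
    have p: "real k powr (3/2) = real k * sqrt (real k)"
    proof -
      have h: "(3/2::real) = 1 + 1/2" by simp
      have "real k powr (3/2) = real k powr 1 * real k powr (1/2)" unfolding h by (rule powr_add)
      then show ?thesis using k1 by (simp add: powr_half_sqrt)
    qed
    show ?case unfolding Ek_formula[OF x y k] p using k1 by (simp add: field_simps)
  qed
  show ?thesis using Lim_transform_eventually[OF l ev] by (simp add: K0_def)
qed

lemma tail_equiv:
  fixes T E \<phi> :: "nat \<Rightarrow> real"
  assumes rec: "\<And>k. k \<ge> M \<Longrightarrow> T k = T (Suc k) + E k"
    and T0: "T \<longlonglongrightarrow> 0"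
    and Eb: "E \<sim>[sequentially] (\<lambda>k. \<phi> k - \<phi> (Suc k))"
    and \<phi>0: "\<phi> \<longlonglongrightarrow> 0"
    and bpos: "eventually (\<lambda>k. \<phi> k - \<phi> (Suc k) > 0) sequentially"
  shows "T \<sim>[sequentially] \<phi>"
  unfolding asymp_equiv_altdef
proof (rule landau_o.smallI)
  fix c :: real assume c: "c > 0"
  let ?b = "\<lambda>k. \<phi> k - \<phi> (Suc k)"
  have "(\<lambda>k. E k - ?b k) \<in> o(?b)" using Eb by (simp add: asymp_equiv_altdef)
  then have "eventually (\<lambda>k. norm (E k - ?b k) \<le> c * norm (?b k)) sequentially"
    using c by (rule landau_o.smallD)
  moreover note bpos
  moreover have "eventually (\<lambda>k. k \<ge> M) sequentially" by (rule eventually_ge_at_top)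
  ultimately have "eventually (\<lambda>k. \<bar>E k - ?b k\<bar> \<le> c * ?b k \<and> ?b k > 0 \<and> k \<ge> M) sequentially"
    by eventually_elim auto
  then obtain N where N: "\<And>k. k \<ge> N \<Longrightarrow> \<bar>E k - ?b k\<bar> \<le> c * ?b k \<and> ?b k > 0 \<and> k \<ge> M"
    by (auto simp: eventually_sequentially)
  have telT: "T k - T (k + n) = (\<Sum>j<n. E (k + j))" if "k \<ge> N" for k n
  proof (induction n)
    case 0 then show ?case by simp
  next
    case (Suc n)
    have "T (k + n) = T (Suc (k + n)) + E (k + n)" using N[of "k+n"] that by (intro rec) auto
    then show ?case using Suc by simp
  qed
  have tel\<phi>: "\<phi> k - \<phi> (k + n) = (\<Sum>j<n. ?b (k + j))" for k n
    by (induction n) auto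
  have \<phi>nn: "\<phi> k \<ge> 0" if "k \<ge> N" for k
  proof -
    have "(\<lambda>n. \<phi> (k + n)) \<longlonglongrightarrow> 0" using LIMSEQ_ignore_initial_segment[OF \<phi>0, of k] by (simp add: add.commute)
    moreover have "\<phi> (k + n) \<le> \<phi> k" for n
    proof -
      have "(\<Sum>j<n. ?b (k + j)) \<ge> 0" using N that by (intro sum_nonneg) (auto simp: less_imp_le)
      then show ?thesis using tel\<phi>[of k n] by simp
    qed
    ultimately show ?thesis by (intro LIMSEQ_le_const2[where X="\<lambda>n. \<phi> (k + n)"]) auto
  qed
  have "\<bar>T k - \<phi> k\<bar> \<le> c * \<phi> k" if k: "k \<ge> N" for k
  proof -
    have bound: "\<bar>(T k - T (k + n)) - (\<phi> k - \<phi> (k + n))\<bar> \<le> c * \<phi> k" for n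
    proof -
      have "\<bar>(T k - T (k + n)) - (\<phi> k - \<phi> (k + n))\<bar> = \<bar>\<Sum>j<n. E (k + j) - ?b (k + j)\<bar>"
        unfolding telT[OF k] tel\<phi> sum_subtractf ..
      also have "\<dots> \<le> (\<Sum>j<n. \<bar>E (k + j) - ?b (k + j)\<bar>)" by (rule sum_abs)
      also have "\<dots> \<le> (\<Sum>j<n. c * ?b (k + j))" using N k by (intro sum_mono) auto
      also have "\<dots> = c * (\<phi> k - \<phi> (k + n))" by (simp add: sum_distrib_left[symmetric] tel\<phi>)
      also have "\<dots> \<le> c * \<phi> k" using \<phi>nn[of "k + n"] k c by (intro mult_left_mono) auto
      finally show ?thesis .
    qed
    have l1: "(\<lambda>n. T (k + n)) \<longlonglongrightarrow> 0" using LIMSEQ_ignore_initial_segment[OF T0, of k] by (simp add: add.commute)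
    have l2: "(\<lambda>n. \<phi> (k + n)) \<longlonglongrightarrow> 0" using LIMSEQ_ignore_initial_segment[OF \<phi>0, of k] by (simp add: add.commute)
    have "(\<lambda>n. \<bar>(T k - T (k + n)) - (\<phi> k - \<phi> (k + n))\<bar>) \<longlonglongrightarrow> \<bar>(T k - 0) - (\<phi> k - 0)\<bar>"
      by (intro tendsto_intros l1 l2)
    then have l: "(\<lambda>n. \<bar>(T k - T (k + n)) - (\<phi> k - \<phi> (k + n))\<bar>) \<longlonglongrightarrow> \<bar>T k - \<phi> k\<bar>" by simp
    show ?thesis by (rule LIMSEQ_le_const2[OF l]) (use bound in auto)
  qed
  then show "eventually (\<lambda>k. norm (T k - \<phi> k) \<le> c * norm (\<phi> k)) sequentially"
    unfolding eventually_sequentially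
  proof (intro exI[of _ N] allI impI)
    fix k assume "k \<ge> N"
    then show "norm (T k - \<phi> k) \<le> c * norm (\<phi> k)" using \<open>\<And>k. k \<ge> N \<Longrightarrow> \<bar>T k - \<phi> k\<bar> \<le> c * \<phi> k\<close> \<phi>nn by simp
  qed
qed

lemma ra1: "(\<lambda>k::nat. real k powr (-3/2)) \<sim>[sequentially] (\<lambda>k. 2 * (real k powr (-1/2) - (real k + 1) powr (-1/2)))"
  by real_asymp

lemma ra2: "(\<lambda>k::nat. real k powr (-1/2)) \<longlonglongrightarrow> 0"
  by real_asymp

lemma ra3: "eventually (\<lambda>k::nat. real k powr (-1/2) - (real k + 1) powr (-1/2) > 0) sequentially"
  by real_asymp

lemma ra4: "(\<lambda>t::nat. (real t + real a) powr (-1/2)) \<sim>[sequentially] (\<lambda>t. real t powr (-1/2))"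
  by real_asymp

lemma ra5: "(\<lambda>t::nat. (real t + real a + 1) powr (-1/2)) \<sim>[sequentially] (\<lambda>t. real t powr (-1/2))"
  by real_asymp

lemma Gamma_nat: "n \<ge> 1 \<Longrightarrow> Gamma (real n) = fact (n - 1)"
  using Gamma_fact[of "n - 1", where 'a=real] by (simp add: of_nat_diff)

lemma Beta_Cxy: assumes "x \<ge> 1" "y \<ge> 1" shows "Beta (real x) (real y) = 1 / Cxy x y"
proof -
  have "Beta (real x) (real y) = Gamma (real x) * Gamma (real y) / Gamma (real (x + y))"
    by (simp add: Beta_def)
  also have "\<dots> = fact (x - 1) * fact (y - 1) / fact (x + y - 1)"
    using assms by (simp only: Gamma_nat)
  finally show ?thesis by (simp add: Cxy_def)
qed

lemma Cxy_pos: "Cxy x y > 0" by (simp add: Cxy_def)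

lemma K0_pos: "K0 x y > 0" by (simp add: K0_def Cxy_pos)

lemma const_eq:
  assumes "x0 \<ge> 1" "y0 \<ge> 1"
  shows "2 * K0 x0 y0 * sqrt 2 = 1 / (2 powr (real x0 + real y0 - 5/2) * sqrt pi * Beta (real x0) (real y0))"
proof -
  have p52: "(2::real) powr (5/2) = 4 * sqrt 2"
  proof -
    have h: "(5/2::real) = 2 + 1/2" by simp
    have "(2::real) powr (5/2) = 2 powr 2 * 2 powr (1/2)" unfolding h by (rule powr_add)
    then show ?thesis by (simp add: powr_half_sqrt)
  qed
  have "(2::real) powr (real x0 + real y0 - 5/2) = 2 powr (real (x0 + y0)) / 2 powr (5/2)"
    by (simp add: powr_diff)
  also have "\<dots> = 2 ^ (x0 + y0) / (4 * sqrt 2)" unfolding p52 by (subst powr_realpow) auto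
  finally have e: "(2::real) powr (real x0 + real y0 - 5/2) = 2 ^ (x0 + y0) / (4 * sqrt 2)" .
  have c: "Cxy x0 y0 > 0" by (rule Cxy_pos)
  show ?thesis unfolding e Beta_Cxy[OF assms] K0_def using c
    by (simp add: field_simps)
qed

lemma main_asymp:
  assumes x: "x0 \<ge> 1" and y: "y0 \<ge> 1"
  shows "Rsum x0 y0 \<sim>[sequentially] (\<lambda>t. 2 * K0 x0 y0 * sqrt 2 * real t powr (-1/2))"
proof -
  define n0 where "n0 = x0 + y0"
  define M where "M = max x0 y0"
  define T where "T k = Rsum x0 y0 (2*k - n0)" for k
  define K where "K = K0 x0 y0"
  define \<phi> where "\<phi> k = 2 * K * real k powr (-1/2)" for k :: nat
  have Kpos: "K > 0" by (simp add: K_def K0_pos)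
  have rec: "T k = T (Suc k) + Ek x0 y0 k" if k: "k \<ge> M" for k
  proof -
    have n0k: "n0 \<le> 2 * k" using k by (simp add: M_def n0_def)
    have a: "Rsum x0 y0 (2*k - n0) = Rsum x0 y0 (Suc (2*k - n0)) + Dr x0 y0 (2*k - n0)"
      by (rule Rsum_dec[OF x y])
    have b: "Rsum x0 y0 (Suc (2*k - n0)) = Rsum x0 y0 (Suc (Suc (2*k - n0))) + Dr x0 y0 (Suc (2*k - n0))"
      by (rule Rsum_dec[OF x y])
    have c: "Dr x0 y0 (Suc (2*k - n0)) = 0"
      by (rule Dr_odd) (use n0k in \<open>simp add: n0_def\<close>)
    have d: "Suc (Suc (2*k - n0)) = 2 * Suc k - n0" using n0k by simp
    show ?thesis unfolding T_def Ek_def using a b c d by (simp add: n0_def)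
  qed
  have T0: "T \<longlonglongrightarrow> 0"
  proof -
    have f: "filterlim (\<lambda>k::nat. 2*k - n0) at_top sequentially"
      unfolding filterlim_at_top
    proof
      fix Z :: nat
      show "eventually (\<lambda>k. Z \<le> 2*k - n0) sequentially"
        using eventually_ge_at_top[of "Z + n0"] by eventually_elim simp
    qed
    show ?thesis unfolding T_def using filterlim_compose[OF Rsum_lim[OF x y] f] .
  qed
  have Eb1: "Ek x0 y0 \<sim>[sequentially] (\<lambda>k. K * real k powr (-3/2))"
  proof (rule asymp_equivI')
    have "(\<lambda>k. Ek x0 y0 k * real k powr (3/2) / K) \<longlonglongrightarrow> K / K"
      using Ek_lim[OF x y] Kpos by (intro tendsto_divide tendsto_const) (auto simp: K_def)
    moreover have "eventually (\<lambda>k. Ek x0 y0 k * real k powr (3/2) / K = Ek x0 y0 k / (K * real k powr (-3/2))) sequentially"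
      using eventually_gt_at_top[of "0::nat"]
    proof eventually_elim
      case (elim k)
      then have "real k powr (-3/2) = 1 / real k powr (3/2)" by (simp add: powr_minus_divide)
      then show ?case using Kpos elim by (simp add: field_simps)
    qed
    ultimately show "(\<lambda>k. Ek x0 y0 k / (K * real k powr (-3/2))) \<longlonglongrightarrow> 1"
      using Kpos by (auto dest: Lim_transform_eventually)
  qed
  have Eb2: "(\<lambda>k. K * real k powr (-3/2)) \<sim>[sequentially] (\<lambda>k. \<phi> k - \<phi> (Suc k))"
  proof -
    have "(\<lambda>k. K * real k powr (-3/2)) \<sim>[sequentially] (\<lambda>k. K * (2 * (real k powr (-1/2) - (real k + 1) powr (-1/2))))"
      by (intro asymp_equiv_intros ra1)
    also have "(\<lambda>k. K * (2 * (real k powr (-1/2) - (real k + 1) powr (-1/2)))) = (\<lambda>k. \<phi> k - \<phi> (Suc k))"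
      by (simp add: \<phi>_def algebra_simps)
    finally show ?thesis .
  qed
  have \<phi>0: "\<phi> \<longlonglongrightarrow> 0"
    unfolding \<phi>_def using tendsto_mult[OF tendsto_const ra2, of "2 * K"] by simp
  have bpos: "eventually (\<lambda>k. \<phi> k - \<phi> (Suc k) > 0) sequentially"
    using ra3
  proof eventually_elim
    case (elim k)
    have "\<phi> k - \<phi> (Suc k) = 2 * K * (real k powr (-1/2) - (real k + 1) powr (-1/2))"
      by (simp add: \<phi>_def algebra_simps)
    then show ?case using elim Kpos by simp
  qed
  have Tphi: "T \<sim>[sequentially] \<phi>"
    by (rule tail_equiv[OF rec T0 asymp_equiv_trans[OF Eb1 Eb2] \<phi>0 bpos])
  define \<kappa> where "\<kappa> t = (t + n0 + 1) div 2" for t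
  have Rk: "Rsum x0 y0 t = T (\<kappa> t)" for t
  proof (cases "even (t + n0)")
    case True
    then have "2 * \<kappa> t - n0 = t" by (auto simp: \<kappa>_def elim!: evenE)
    then show ?thesis by (simp add: T_def)
  next
    case False
    then have e: "2 * \<kappa> t - n0 = Suc t" by (auto simp: \<kappa>_def elim!: oddE)
    have "Dr x0 y0 t = 0" using False by (intro Dr_odd) (simp add: n0_def add_ac)
    then show ?thesis using Rsum_dec[OF x y, of t] e by (simp add: T_def)
  qed
  have fk: "filterlim \<kappa> at_top sequentially"
    unfolding filterlim_at_top
  proof
    fix Z :: nat
    show "eventually (\<lambda>t. Z \<le> \<kappa> t) sequentially"
      using eventually_ge_at_top[of "2 * Z"] by eventually_elim (simp add: \<kappa>_def)
  qed
  have R1: "Rsum x0 y0 \<sim>[sequentially] (\<lambda>t. \<phi> (\<kappa> t))"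
    unfolding Rk using asymp_equiv_compose'[OF Tphi fk] .
  have lo: "(\<lambda>t. 2 * K * sqrt 2 * (real t + real n0 + 1) powr (-1/2)) \<sim>[sequentially] (\<lambda>t. 2 * K * sqrt 2 * real t powr (-1/2))"
    by (intro asymp_equiv_intros ra5)
  have hi: "(\<lambda>t. 2 * K * sqrt 2 * (real t + real n0) powr (-1/2)) \<sim>[sequentially] (\<lambda>t. 2 * K * sqrt 2 * real t powr (-1/2))"
    by (intro asymp_equiv_intros ra4)
  have half: "(v / 2) powr (-1/2) = sqrt 2 * v powr (-1/2)" if "v > 0" for v :: real
  proof -
    have "(v / 2) powr (-1/2) = v powr (-1/2) / 2 powr (-1/2)" by (rule powr_divide)
    also have "2 powr (-1/2::real) = 1 / sqrt 2" by (simp add: powr_minus_divide powr_half_sqrt)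
    finally show ?thesis by simp
  qed
  have sand: "eventually (\<lambda>t. \<phi> (\<kappa> t) \<in> {2 * K * sqrt 2 * (real t + real n0 + 1) powr (-1/2) ..
        2 * K * sqrt 2 * (real t + real n0) powr (-1/2)}) sequentially"
    using eventually_gt_at_top[of "0::nat"]
  proof eventually_elim
    case (elim t)
    have n1: "t + n0 \<le> 2 * \<kappa> t" "2 * \<kappa> t \<le> t + n0 + 1" unfolding \<kappa>_def by presburger+
    have n2: "real (t + n0) \<le> real (2 * \<kappa> t)" "real (2 * \<kappa> t) \<le> real (t + n0 + 1)"
      using n1 by (simp_all only: of_nat_le_iff)
    have k1: "real (\<kappa> t) \<ge> (real t + real n0) / 2" "real (\<kappa> t) \<le> (real t + real n0 + 1) / 2"
      using n2 by simp_all
    have pos: "(real t + real n0) / 2 > 0" using elim by simp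
    have A: "real (\<kappa> t) powr (-1/2) \<le> ((real t + real n0) / 2) powr (-1/2)"
      by (rule powr_mono2') (use k1 pos in auto)
    have B: "((real t + real n0 + 1) / 2) powr (-1/2) \<le> real (\<kappa> t) powr (-1/2)"
      by (rule powr_mono2') (use k1 pos in auto)
    have A': "real (\<kappa> t) powr (-1/2) \<le> sqrt 2 * (real t + real n0) powr (-1/2)"
      using A half[of "real t + real n0"] pos by simp
    have B': "sqrt 2 * (real t + real n0 + 1) powr (-1/2) \<le> real (\<kappa> t) powr (-1/2)"
      using B half[of "real t + real n0 + 1"] pos by simp
    show ?case unfolding \<phi>_def using A' B' Kpos by (auto simp: mult.assoc intro!: mult_left_mono)
  qed
  have R2: "(\<lambda>t. \<phi> (\<kappa> t)) \<sim>[sequentially] (\<lambda>t. 2 * K * sqrt 2 * real t powr (-1/2))"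
    by (rule asymp_equiv_sandwich_real[OF lo hi sand])
  show ?thesis using asymp_equiv_trans[OF R1 R2] by (simp add: K_def)
qed

theorem theorem1:
  fixes x0 y0 :: nat
  assumes "x0 \<ge> 1" and "y0 \<ge> 1"
  shows "(\<lambda>t::nat. measure ca_space {\<omega> \<in> space ca_space. last_tie 1 x0 y0 \<omega> \<ge> ereal (real t)})
          \<sim>[sequentially]
         (\<lambda>t::nat. 1 / (2 powr (real x0 + real y0 - 5/2) * sqrt pi * Beta (real x0) (real y0))
                    * real t powr (-1/2))"
proof -
  have "(\<lambda>t::nat. measure ca_space {\<omega> \<in> space ca_space. last_tie 1 x0 y0 \<omega> \<ge> ereal (real t)}) = Rsum x0 y0"
    using measure_eq_Rsum[OF assms] by (intro ext) simp
  moreover have "Rsum x0 y0 \<sim>[sequentially] (\<lambda>t. 2 * K0 x0 y0 * sqrt 2 * real t powr (-1/2))"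
    by (rule main_asymp[OF assms])
  ultimately show ?thesis unfolding const_eq[OF assms] by simp
qed

end
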